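(* The function $\mu(\cdot)$ satisfies $\displaystyle\lim_{\lambda\to\infty}\frac{\mu(\lambda)}{\lambda}=\infty$. In particular, $\mu:[\lambda_0,\infty)\to[\mu(\lambda_0),\infty)$ is a bijection.
   Context: Setting: - $g>0$, $\sigma>0$, and $p_0<p_1<0$. - $\gamma=\gamma_1$ on $[p_0,p_1)$ and $\gamma=\gamma_2$ on $(p_1,0]$, with $\gamma_1\in C^\alpha([p_0,p_1])$ and $\gamma_2\in C^\alpha([p_1,0])$. - $\Gamma(p)=\int_0^p\gamma$, and $a(p;\lambda)=\sqrt{\lambda-2\Gamma(p)}$. - $\mathfrak z(\cdot;\lambda,\mu)$ solves $(a^3\mathfrak z')'-\mu a\mathfrak z=0$ on $(p_0,0)$ with $\mathfrak z(p_0)=0$, $\mathfrak z'(p_0)=1$. - $\Xi(\lambda,\mu):=\lambda^{3/2}\mathfrak z'(0;\lambda,\mu)-(g+\sigma\mu)\mathfrak z(0;\lambda,\mu)$. - $\lambda_0$ is the unique $\lambda>2\max\Gamma$ with $\frac1g=\int_{p_0}^0a(p;\lambda)^{-3}dp$. - For $\lambda\ge\lambda_0$, $\mu(\lambda)$ is the largest zero $\mu\ge0$ of $\Xi(\lambda,\cdot)$, i.e. $\Xi(\lambda,\mu(\lambda))=0$ and $\Xi(\lambda,\mu')<0$ for all $\mu'>\mu(\lambda)$. *)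

theory Defs
  imports "HOL-Analysis.Analysis"
begin

definition holder_on :: "real \<Rightarrow> real set \<Rightarrow> (real \<Rightarrow> real) \<Rightarrow> bool" where
  "holder_on \<alpha> S f \<longleftrightarrow> (\<exists>C. \<forall>x\<in>S. \<forall>y\<in>S. \<bar>f x - f y\<bar> \<le> C * \<bar>x - y\<bar> powr \<alpha>)"

text \<open>The piecewise vorticity gamma: gamma1 on [p0,p1), gamma2 on [p1,0]
  (the value at the single point p1 is irrelevant).\<close>
definition gam :: "real \<Rightarrow> (real \<Rightarrow> real) \<Rightarrow> (real \<Rightarrow> real) \<Rightarrow> real \<Rightarrow> real" where
  "gam p1 \<gamma>1 \<gamma>2 p = (if p < p1 then \<gamma>1 p else \<gamma>2 p)"

definition Gam :: "(real \<Rightarrow> real) \<Rightarrow> real \<Rightarrow> real" where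
  "Gam \<gamma> p = (if 0 \<le> p then integral {0..p} \<gamma> else - integral {p..0} \<gamma>)"

definition aa :: "(real \<Rightarrow> real) \<Rightarrow> real \<Rightarrow> real \<Rightarrow> real" where
  "aa \<gamma> l p = sqrt (l - 2 * Gam \<gamma> p)"

definition is_zsol :: "(real \<Rightarrow> real) \<Rightarrow> real \<Rightarrow> real \<Rightarrow> real \<Rightarrow> (real \<Rightarrow> real) \<Rightarrow> (real \<Rightarrow> real) \<Rightarrow> bool" where
  "is_zsol \<gamma> p0 l m z z' \<longleftrightarrow>
     (\<forall>p\<in>{p0..0}. (z has_real_derivative z' p) (at p within {p0..0})) \<and>
     continuous_on {p0..0} z' \<and>
     (\<forall>p\<in>{p0<..<0}. ((\<lambda>q. aa \<gamma> l q ^ 3 * z' q) has_real_derivative m * aa \<gamma> l p * z p) (at p)) \<and>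
     z p0 = 0 \<and> z' p0 = 1"

definition Xi :: "(real \<Rightarrow> real) \<Rightarrow> real \<Rightarrow> real \<Rightarrow> real \<Rightarrow> real \<Rightarrow> real \<Rightarrow> real" where
  "Xi \<gamma> p0 g \<sigma> l m = (THE v. \<exists>z z'. is_zsol \<gamma> p0 l m z z' \<and>
        v = l powr (3/2) * z' 0 - (g + \<sigma> * m) * z 0)"

definition lam0 :: "(real \<Rightarrow> real) \<Rightarrow> real \<Rightarrow> real \<Rightarrow> real" where
  "lam0 \<gamma> p0 g = (THE l. l > 2 * Sup (Gam \<gamma> ` {p0..0}) \<and>
        1 / g = integral {p0..0} (\<lambda>p. 1 / aa \<gamma> l p ^ 3))"

definition muf :: "(real \<Rightarrow> real) \<Rightarrow> real \<Rightarrow> real \<Rightarrow> real \<Rightarrow> real \<Rightarrow> real" where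
  "muf \<gamma> p0 g \<sigma> l = (THE m. 0 \<le> m \<and> Xi \<gamma> p0 g \<sigma> l m = 0 \<and>
        (\<forall>m'>m. Xi \<gamma> p0 g \<sigma> l m' < 0))"

end

theory Submission
  imports Defs
begin


lemma exp_hasint:
  fixes K u v :: real
  assumes "K > 0" "u \<le> v"
  shows "((\<lambda>t. exp (K*(t-u))) has_integral (exp(K*(v-u)) - 1)/K) {u..v}"
proof -
  have d: "((\<lambda>t. exp (K*(t-u)) / K) has_vector_derivative exp (K*(x-u))) (at x within {u..v})" for x
    unfolding has_real_derivative_iff_has_vector_derivative[symmetric]
    using assms(1) by (auto intro!: derivative_eq_intros)
  have "((\<lambda>t. exp (K*(t-u))) has_integral (exp (K*(v-u)) / K - exp (K*(u-u)) / K)) {u..v}"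
    by (rule fundamental_theorem_of_calculus[OF assms(2) d])
  moreover have "exp (K*(v-u)) / K - exp (K*(u-u)) / K = (exp(K*(v-u)) - 1)/K"
    by (simp add: diff_divide_distrib)
  ultimately show ?thesis by simp
qed

locale odeI =
  fixes x0 x1 :: real and b c :: "real \<Rightarrow> real"
  assumes x01: "x0 < x1"
    and bcont: "continuous_on {x0..x1} b" and ccont: "continuous_on {x0..x1} c"
    and bpos: "\<And>p. p \<in> {x0..x1} \<Longrightarrow> 0 < b p" and cnn: "\<And>p. p \<in> {x0..x1} \<Longrightarrow> 0 \<le> c p"
begin

definition Tz :: "(real \<Rightarrow> real) \<Rightarrow> real \<Rightarrow> real" where
  "Tz w p = integral {x0..p} (\<lambda>t. w t / b t)"
definition Tw :: "(real \<Rightarrow> real) \<Rightarrow> real \<Rightarrow> real" where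
  "Tw w p = b x0 + integral {x0..p} (\<lambda>s. c s * Tz w s)"

fun it :: "nat \<Rightarrow> real \<Rightarrow> real" where
  "it 0 = (\<lambda>_. b x0)" | "it (Suc n) = Tw (it n)"

lemma int_sub:
  fixes f :: "real \<Rightarrow> real"
  assumes "continuous_on {x0..x1} f" "p \<in> {x0..x1}"
  shows "f integrable_on {x0..p}"
proof -
  have "{x0..p} \<subseteq> {x0..x1}" using assms(2) by auto
  then show ?thesis by (intro integrable_continuous_interval continuous_on_subset[OF assms(1)])
qed

lemma div_b_cont: "continuous_on {x0..x1} w \<Longrightarrow> continuous_on {x0..x1} (\<lambda>t. w t / b t)"
  by (rule continuous_on_divide[OF _ bcont]) (use bpos in force)+

lemma Tz_cont: "continuous_on {x0..x1} w \<Longrightarrow> continuous_on {x0..x1} (Tz w)"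
  unfolding Tz_def
  by (rule indefinite_integral_continuous_1, rule integrable_continuous_interval, erule div_b_cont)

lemma Tw_cont: "continuous_on {x0..x1} w \<Longrightarrow> continuous_on {x0..x1} (Tw w)"
  unfolding Tw_def
  by (intro continuous_on_add continuous_on_const indefinite_integral_continuous_1
      integrable_continuous_interval continuous_on_mult ccont Tz_cont)

lemma Tz_mono:
  assumes "continuous_on {x0..x1} w" "continuous_on {x0..x1} w'"
    "\<And>t. t \<in> {x0..x1} \<Longrightarrow> w t \<le> w' t" "p \<in> {x0..x1}"
  shows "Tz w p \<le> Tz w' p"
  unfolding Tz_def
proof (rule integral_le)
  show "(\<lambda>t. w t / b t) integrable_on {x0..p}" by (rule int_sub[OF div_b_cont[OF assms(1)] assms(4)])
  show "(\<lambda>t. w' t / b t) integrable_on {x0..p}" by (rule int_sub[OF div_b_cont[OF assms(2)] assms(4)])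
  fix t assume "t \<in> {x0..p}"
  then have t: "t \<in> {x0..x1}" using assms(4) by auto
  show "w t / b t \<le> w' t / b t"
    using assms(3)[OF t] bpos[OF t] by (simp add: divide_right_mono)
qed

lemma Tz_nonneg:
  assumes "continuous_on {x0..x1} w" "\<And>t. t \<in> {x0..x1} \<Longrightarrow> 0 \<le> w t" "p \<in> {x0..x1}"
  shows "0 \<le> Tz w p"
  unfolding Tz_def
proof (rule integral_nonneg)
  show "(\<lambda>t. w t / b t) integrable_on {x0..p}" by (rule int_sub[OF div_b_cont[OF assms(1)] assms(3)])
  fix t assume "t \<in> {x0..p}"
  then have t: "t \<in> {x0..x1}" using assms(3) by auto
  show "0 \<le> w t / b t" using assms(2)[OF t] bpos[OF t] by simp
qed

lemma Tw_mono:
  assumes "continuous_on {x0..x1} w" "continuous_on {x0..x1} w'"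
    "\<And>t. t \<in> {x0..x1} \<Longrightarrow> w t \<le> w' t" "p \<in> {x0..x1}"
  shows "Tw w p \<le> Tw w' p"
  unfolding Tw_def
proof -
  have "integral {x0..p} (\<lambda>s. c s * Tz w s) \<le> integral {x0..p} (\<lambda>s. c s * Tz w' s)"
  proof (rule integral_le)
    show "(\<lambda>s. c s * Tz w s) integrable_on {x0..p}"
      by (rule int_sub[OF continuous_on_mult[OF ccont Tz_cont[OF assms(1)]] assms(4)])
    show "(\<lambda>s. c s * Tz w' s) integrable_on {x0..p}"
      by (rule int_sub[OF continuous_on_mult[OF ccont Tz_cont[OF assms(2)]] assms(4)])
    fix s assume "s \<in> {x0..p}"
    then have s: "s \<in> {x0..x1}" using assms(4) by auto
    show "c s * Tz w s \<le> c s * Tz w' s"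
      by (rule mult_left_mono[OF Tz_mono[OF assms(1-3) s] cnn[OF s]])
  qed
  then show "b x0 + integral {x0..p} (\<lambda>s. c s * Tz w s) \<le> b x0 + integral {x0..p} (\<lambda>s. c s * Tz w' s)"
    by simp
qed

lemma Tw_ge:
  assumes "continuous_on {x0..x1} w" "\<And>t. t \<in> {x0..x1} \<Longrightarrow> 0 \<le> w t" "p \<in> {x0..x1}"
  shows "b x0 \<le> Tw w p"
  unfolding Tw_def
proof -
  have "0 \<le> integral {x0..p} (\<lambda>s. c s * Tz w s)"
  proof (rule integral_nonneg)
    show "(\<lambda>s. c s * Tz w s) integrable_on {x0..p}"
      by (rule int_sub[OF continuous_on_mult[OF ccont Tz_cont[OF assms(1)]] assms(3)])
    fix s assume "s \<in> {x0..p}"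
    then have s: "s \<in> {x0..x1}" using assms(3) by auto
    show "0 \<le> c s * Tz w s" using cnn[OF s] Tz_nonneg[OF assms(1,2) s] by simp
  qed
  then show "b x0 \<le> b x0 + integral {x0..p} (\<lambda>s. c s * Tz w s)" by simp
qed

lemma b0pos: "0 < b x0" using bpos x01 by auto

lemma it_cont: "continuous_on {x0..x1} (it n)"
  by (induction n) (auto intro: Tw_cont)

lemma it_ge: "p \<in> {x0..x1} \<Longrightarrow> b x0 \<le> it n p"
proof (induction n arbitrary: p)
  case 0 then show ?case by simp
next
  case (Suc n)
  show ?case using Tw_ge[OF it_cont, of n] Suc b0pos by (simp add: order_trans[OF less_imp_le])
qed

lemma it_mono: "p \<in> {x0..x1} \<Longrightarrow> it n p \<le> it (Suc n) p"
proof (induction n arbitrary: p)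
  case 0 then show ?case using it_ge[of p 1] by simp
next
  case (Suc n)
  then show ?case using Tw_mono[OF it_cont it_cont, of n "Suc n"] by simp
qed

lemma it_bdd: "\<exists>B. \<forall>n. \<forall>p\<in>{x0..x1}. it n p \<le> B"
proof -
  obtain Cm where Cm: "Cm \<ge> 0" "\<And>x. x \<in> {x0..x1} \<Longrightarrow> norm (c x) \<le> Cm"
    using continuous_on_compact_bound[OF compact_Icc ccont] by blast
  have ib: "continuous_on {x0..x1} (\<lambda>t. 1 / b t)" using div_b_cont[OF continuous_on_const] .
  obtain Dm where Dm: "Dm \<ge> 0" "\<And>x. x \<in> {x0..x1} \<Longrightarrow> norm (1 / b x) \<le> Dm"
    using continuous_on_compact_bound[OF compact_Icc ib] by blast
  define K where "K = 1 + Cm * Dm"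
  have cd0: "0 \<le> Cm * Dm" using Cm(1) Dm(1) by simp
  have K1: "1 \<le> K" using cd0 unfolding K_def by simp
  have "1 * K \<le> K * K" by (rule mult_right_mono[OF K1]) (use K1 in simp)
  then have kk: "K \<le> K * K" by simp
  have "Cm * Dm \<le> K" unfolding K_def by simp
  then have K: "K > 0" "Cm * Dm \<le> K * K" using K1 kk by linarith+
  define E where "E p = b x0 * exp (K*(p-x0))" for p
  have b0: "0 < b x0" by (rule b0pos)
  have main: "\<forall>p\<in>{x0..x1}. it n p \<le> E p" for n
  proof (induction n)
    case 0
    show ?case unfolding E_def using b0 K(1) by auto
  next
    case (Suc n)
    show ?case
    proof
      fix p assume p: "p \<in> {x0..x1}"
      have tzb: "Tz (it n) s \<le> Dm * b x0 * exp (K*(s-x0)) / K" if s: "s \<in> {x0..x1}" for s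
      proof -
        have hI: "((\<lambda>t. Dm * (b x0 * exp (K*(t-x0)))) has_integral Dm * (b x0 * ((exp(K*(s-x0)) - 1)/K))) {x0..s}"
          by (intro has_integral_mult_right exp_hasint K(1)) (use s in auto)
        have "Tz (it n) s \<le> Dm * (b x0 * ((exp(K*(s-x0)) - 1)/K))"
          unfolding Tz_def
        proof (rule has_integral_le[OF integrable_integral[OF int_sub[OF div_b_cont[OF it_cont] s]] hI])
          fix t assume "t \<in> {x0..s}"
          then have t: "t \<in> {x0..x1}" using s by auto
          have "it n t / b t = it n t * (1 / b t)" by simp
          also have "\<dots> \<le> E t * Dm"
            apply (rule mult_mono)
            using Suc t Dm(2)[OF t] bpos[OF t] b0 unfolding E_def by auto
          finally show "it n t / b t \<le> Dm * (b x0 * exp (K * (t - x0)))" unfolding E_def by (simp add: algebra_simps)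
        qed
        also have "\<dots> = (Dm * b x0 / K) * (exp(K*(s-x0)) - 1)" by simp
        also have "\<dots> \<le> (Dm * b x0 / K) * exp(K*(s-x0))"
          by (rule mult_left_mono) (use Dm(1) b0 K(1) in auto)
        also have "\<dots> = Dm * b x0 * exp (K*(s-x0)) / K" by simp
        finally show ?thesis .
      qed
      have hI2: "((\<lambda>s. (Cm * Dm * b x0 / K) * exp (K*(s-x0))) has_integral (Cm * Dm * b x0 / K) * ((exp(K*(p-x0)) - 1)/K)) {x0..p}"
        by (intro has_integral_mult_right exp_hasint K(1)) (use p in auto)
      have "integral {x0..p} (\<lambda>s. c s * Tz (it n) s) \<le> (Cm * Dm * b x0 / K) * ((exp(K*(p-x0)) - 1)/K)"
      proof (rule has_integral_le[OF integrable_integral[OF int_sub[OF continuous_on_mult[OF ccont Tz_cont[OF it_cont]] p]] hI2])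
        fix s assume "s \<in> {x0..p}"
        then have s: "s \<in> {x0..x1}" using p by auto
        have "c s * Tz (it n) s \<le> c s * (Dm * b x0 * exp (K*(s-x0)) / K)"
          by (rule mult_left_mono[OF tzb[OF s] cnn[OF s]])
        also have "\<dots> \<le> Cm * (Dm * b x0 * exp (K*(s-x0)) / K)"
          apply (rule mult_right_mono)
          using Cm(2)[OF s] Dm(1) b0 K(1) by auto
        finally show "c s * Tz (it n) s \<le> Cm * Dm * b x0 / K * exp (K * (s - x0))" by simp
      qed
      also have "\<dots> \<le> b x0 * (exp(K*(p-x0)) - 1)"
      proof -
        have e: "exp(K*(p-x0)) - 1 \<ge> 0" using p K(1) by auto
        have q: "Cm * Dm / (K*K) \<le> 1" using K by (simp add: divide_simps)
        have "(Cm * Dm * b x0 / K) * ((exp(K*(p-x0)) - 1)/K) = (Cm * Dm / (K*K)) * (b x0 * (exp(K*(p-x0)) - 1))"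
          by (simp add: field_simps)
        also have "\<dots> \<le> 1 * (b x0 * (exp(K*(p-x0)) - 1))"
          by (rule mult_right_mono[OF q]) (use e b0 in simp)
        finally show ?thesis by simp
      qed
      finally show "it (Suc n) p \<le> E p" unfolding E_def by (simp add: Tw_def algebra_simps)
    qed
  qed
  show ?thesis
  proof (intro exI allI ballI)
    fix n p assume p: "p \<in> {x0..x1}"
    have "it n p \<le> E p" using main p by blast
    also have "\<dots> \<le> b x0 * exp (K*(x1-x0))" unfolding E_def
      using p K(1) b0 by (auto intro!: mult_left_mono)
    finally show "it n p \<le> b x0 * exp (K*(x1-x0))" .
  qed
qed

definition Bd where "Bd = (SOME B. \<forall>n. \<forall>p\<in>{x0..x1}. it n p \<le> B)"

lemma it_le_Bd: "p \<in> {x0..x1} \<Longrightarrow> it n p \<le> Bd"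
  using someI_ex[OF it_bdd] unfolding Bd_def by blast

definition Wl where "Wl p = (SUP n. it n p)"

lemma it_lim: "p \<in> {x0..x1} \<Longrightarrow> (\<lambda>n. it n p) \<longlonglongrightarrow> Wl p"
  unfolding Wl_def
  by (rule LIMSEQ_incseq_SUP) (auto intro!: bdd_aboveI[of _ Bd] incseq_SucI it_mono it_le_Bd)

lemma W_ge: "p \<in> {x0..x1} \<Longrightarrow> b x0 \<le> Wl p"
proof -
  assume p: "p \<in> {x0..x1}"
  show ?thesis by (rule LIMSEQ_le_const[OF it_lim[OF p]]) (use it_ge[OF p] in blast)
qed

lemma MC1:
  assumes s: "s \<in> {x0..x1}"
  shows "(\<lambda>t. Wl t / b t) integrable_on {x0..s} \<and> (\<lambda>k. Tz (it k) s) \<longlonglongrightarrow> Tz Wl s"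
  unfolding Tz_def
proof (rule monotone_convergence_increasing)
  fix k show "(\<lambda>t. it k t / b t) integrable_on {x0..s}" by (rule int_sub[OF div_b_cont[OF it_cont] s])
next
  fix k t assume "t \<in> {x0..s}"
  then have t: "t \<in> {x0..x1}" using s by auto
  show "it k t / b t \<le> it (Suc k) t / b t"
    using it_mono[OF t, of k] bpos[OF t] by (simp add: divide_right_mono)
next
  fix t assume "t \<in> {x0..s}"
  then have t: "t \<in> {x0..x1}" using s by auto
  show "(\<lambda>k. it k t / b t) \<longlonglongrightarrow> Wl t / b t"
    by (rule tendsto_divide[OF it_lim[OF t] tendsto_const]) (use bpos[OF t] in simp)
next
  have ib: "(\<lambda>t. Bd / b t) integrable_on {x0..s}" by (rule int_sub[OF div_b_cont[OF continuous_on_const] s])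
  show "bounded (range (\<lambda>k. integral {x0..s} (\<lambda>t. it k t / b t)))"
    unfolding bounded_iff
  proof (intro exI ballI)
    fix y assume "y \<in> range (\<lambda>k. integral {x0..s} (\<lambda>t. it k t / b t))"
    then obtain k where y: "y = integral {x0..s} (\<lambda>t. it k t / b t)" by auto
    have i1: "(\<lambda>t. it k t / b t) integrable_on {x0..s}" by (rule int_sub[OF div_b_cont[OF it_cont] s])
    have "0 \<le> y" unfolding y
    proof (rule integral_nonneg[OF i1])
      fix t assume "t \<in> {x0..s}"
      then have t: "t \<in> {x0..x1}" using s by auto
      show "0 \<le> it k t / b t" using it_ge[OF t, of k] bpos[OF t] b0pos by simp
    qed
    moreover have "y \<le> integral {x0..s} (\<lambda>t. Bd / b t)" unfolding y
    proof (rule integral_le[OF i1 ib])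
      fix t assume "t \<in> {x0..s}"
      then have t: "t \<in> {x0..x1}" using s by auto
      show "it k t / b t \<le> Bd / b t" using it_le_Bd[OF t, of k] bpos[OF t] by (simp add: divide_right_mono)
    qed
    ultimately show "norm y \<le> integral {x0..s} (\<lambda>t. Bd / b t)" by simp
  qed
qed

lemma W_int: "s \<in> {x0..x1} \<Longrightarrow> (\<lambda>t. Wl t / b t) integrable_on {x0..s}"
  using MC1 by blast

lemma Tz_lim: "s \<in> {x0..x1} \<Longrightarrow> (\<lambda>k. Tz (it k) s) \<longlonglongrightarrow> Tz Wl s"
  using MC1 by blast

lemma MC2:
  assumes p: "p \<in> {x0..x1}"
  shows "(\<lambda>s. c s * Tz Wl s) integrable_on {x0..p} \<and>
     (\<lambda>k. integral {x0..p} (\<lambda>s. c s * Tz (it k) s)) \<longlonglongrightarrow> integral {x0..p} (\<lambda>s. c s * Tz Wl s)"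
proof (rule monotone_convergence_increasing)
  fix k show "(\<lambda>s. c s * Tz (it k) s) integrable_on {x0..p}"
    by (rule int_sub[OF continuous_on_mult[OF ccont Tz_cont[OF it_cont]] p])
next
  fix k t assume "t \<in> {x0..p}"
  then have t: "t \<in> {x0..x1}" using p by auto
  show "c t * Tz (it k) t \<le> c t * Tz (it (Suc k)) t"
    by (rule mult_left_mono[OF Tz_mono[OF it_cont it_cont it_mono t] cnn[OF t]])
next
  fix t assume "t \<in> {x0..p}"
  then have t: "t \<in> {x0..x1}" using p by auto
  show "(\<lambda>k. c t * Tz (it k) t) \<longlonglongrightarrow> c t * Tz Wl t"
    by (rule tendsto_mult[OF tendsto_const Tz_lim[OF t]])
next
  have ib: "(\<lambda>s. c s * Tz (\<lambda>_. Bd) s) integrable_on {x0..p}"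
    by (rule int_sub[OF continuous_on_mult[OF ccont Tz_cont[OF continuous_on_const]] p])
  show "bounded (range (\<lambda>k. integral {x0..p} (\<lambda>s. c s * Tz (it k) s)))"
    unfolding bounded_iff
  proof (intro exI ballI)
    fix y assume "y \<in> range (\<lambda>k. integral {x0..p} (\<lambda>s. c s * Tz (it k) s))"
    then obtain k where y: "y = integral {x0..p} (\<lambda>s. c s * Tz (it k) s)" by auto
    have i1: "(\<lambda>s. c s * Tz (it k) s) integrable_on {x0..p}"
      by (rule int_sub[OF continuous_on_mult[OF ccont Tz_cont[OF it_cont]] p])
    have "0 \<le> y" unfolding y
    proof (rule integral_nonneg[OF i1])
      fix t assume "t \<in> {x0..p}"
      then have t: "t \<in> {x0..x1}" using p by auto
      have "0 \<le> Tz (it k) t"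
        by (rule Tz_nonneg[OF it_cont _ t]) (meson it_ge b0pos order_trans less_imp_le)
      then show "0 \<le> c t * Tz (it k) t" using cnn[OF t] by simp
    qed
    moreover have "y \<le> integral {x0..p} (\<lambda>s. c s * Tz (\<lambda>_. Bd) s)" unfolding y
    proof (rule integral_le[OF i1 ib])
      fix t assume "t \<in> {x0..p}"
      then have t: "t \<in> {x0..x1}" using p by auto
      show "c t * Tz (it k) t \<le> c t * Tz (\<lambda>_. Bd) t"
        by (rule mult_left_mono[OF Tz_mono[OF it_cont continuous_on_const it_le_Bd t] cnn[OF t]])
    qed
    ultimately show "norm y \<le> integral {x0..p} (\<lambda>s. c s * Tz (\<lambda>_. Bd) s)" by simp
  qed
qed

lemma W_fix: "p \<in> {x0..x1} \<Longrightarrow> Wl p = Tw Wl p"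
proof -
  assume p: "p \<in> {x0..x1}"
  have "(\<lambda>k. it (Suc k) p) \<longlonglongrightarrow> Tw Wl p"
    unfolding it.simps Tw_def using MC2[OF p] by (intro tendsto_add tendsto_const) auto
  moreover have "(\<lambda>k. it (Suc k) p) \<longlonglongrightarrow> Wl p" by (rule LIMSEQ_Suc[OF it_lim[OF p]])
  ultimately show ?thesis using LIMSEQ_unique by blast
qed

lemma W_cont: "continuous_on {x0..x1} Wl"
proof -
  have h: "(\<lambda>s. c s * Tz Wl s) integrable_on {x0..x1}" using MC2[of x1] x01 by auto
  have "continuous_on {x0..x1} (\<lambda>p. b x0 + integral {x0..p} (\<lambda>s. c s * Tz Wl s))"
    by (intro continuous_on_add continuous_on_const indefinite_integral_continuous_1 h)
  then show ?thesis
    by (rule continuous_on_eq) (simp add: W_fix Tw_def)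
qed

lemma Z_deriv: "p \<in> {x0..x1} \<Longrightarrow> (Tz Wl has_real_derivative Wl p / b p) (at p within {x0..x1})"
  unfolding Tz_def[abs_def]
  by (rule integral_has_real_derivative[OF div_b_cont[OF W_cont]])

lemma W_deriv: "p \<in> {x0..x1} \<Longrightarrow> (Wl has_real_derivative c p * Tz Wl p) (at p within {x0..x1})"
proof -
  assume p: "p \<in> {x0..x1}"
  have "((\<lambda>q. b x0 + integral {x0..q} (\<lambda>s. c s * Tz Wl s)) has_real_derivative 0 + c p * Tz Wl p) (at p within {x0..x1})"
    by (rule DERIV_add[OF DERIV_const integral_has_real_derivative[OF continuous_on_mult[OF ccont Tz_cont[OF W_cont]] p]])
  then have "(Tw Wl has_real_derivative c p * Tz Wl p) (at p within {x0..x1})"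
    unfolding Tw_def[abs_def] by simp
  then show ?thesis
    by (rule has_field_derivative_transform_within[where d=1]) (use p W_fix in auto)
qed

lemma ode_exists:
  "\<exists>Z Wl. continuous_on {x0..x1} Wl \<and> (\<forall>p\<in>{x0..x1}. b x0 \<le> Wl p) \<and> Wl x0 = b x0 \<and> Z x0 = 0 \<and>
     (\<forall>p\<in>{x0..x1}. (Z has_real_derivative Wl p / b p) (at p within {x0..x1})) \<and>
     (\<forall>p\<in>{x0..x1}. (Wl has_real_derivative c p * Z p) (at p within {x0..x1}))"
proof -
  have x0: "x0 \<in> {x0..x1}" using x01 by auto
  have "Wl x0 = b x0" using W_fix[OF x0] by (simp add: Tw_def)
  moreover have "Tz Wl x0 = 0" by (simp add: Tz_def)
  ultimately show ?thesis
    apply (rule_tac x="Tz Wl" in exI, rule_tac x=Wl in exI)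
    using W_cont W_ge Z_deriv W_deriv by blast
qed

end


context odeI begin

definition osol where
  "osol Z W \<longleftrightarrow> continuous_on {x0..x1} W \<and> (\<forall>p\<in>{x0..x1}. b x0 \<le> W p) \<and> W x0 = b x0 \<and> Z x0 = 0 \<and>
     (\<forall>p\<in>{x0..x1}. (Z has_real_derivative W p / b p) (at p within {x0..x1})) \<and>
     (\<forall>p\<in>{x0..x1}. (W has_real_derivative c p * Z p) (at p within {x0..x1}))"

lemma osol_exists: "\<exists>Z W. osol Z W"
  using ode_exists unfolding osol_def by blast

lemma deriv_cont_on:
  assumes "\<forall>p\<in>{x0..x1}. (f has_real_derivative f' p) (at p within {x0..x1})"
  shows "continuous_on {x0..x1} f"
  unfolding continuous_on_eq_continuous_within using assms DERIV_continuous by blast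

lemma osol_Zcont: "osol Z W \<Longrightarrow> continuous_on {x0..x1} Z"
proof -
  assume "osol Z W"
  then have "\<forall>p\<in>{x0..x1}. (Z has_real_derivative W p / b p) (at p within {x0..x1})" by (simp add: osol_def)
  then show ?thesis by (rule deriv_cont_on)
qed

lemma bounds:
  obtains Cm Dm where "Cm \<ge> 0" "\<And>x. x \<in> {x0..x1} \<Longrightarrow> c x \<le> Cm"
    "Dm \<ge> 0" "\<And>x. x \<in> {x0..x1} \<Longrightarrow> 1 / b x \<le> Dm"
proof -
  obtain Cm where Cm: "Cm \<ge> 0" "\<And>x. x \<in> {x0..x1} \<Longrightarrow> norm (c x) \<le> Cm"
    using continuous_on_compact_bound[OF compact_Icc ccont] by blast
  have ib: "continuous_on {x0..x1} (\<lambda>t. 1 / b t)" using div_b_cont[OF continuous_on_const] .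
  obtain Dm where Dm: "Dm \<ge> 0" "\<And>x. x \<in> {x0..x1} \<Longrightarrow> norm (1 / b x) \<le> Dm"
    using continuous_on_compact_bound[OF compact_Icc ib] by blast
  have c1: "c x \<le> Cm" if "x \<in> {x0..x1}" for x using Cm(2)[OF that] by (simp add: abs_le_iff)
  have d1: "1 / b x \<le> Dm" if "x \<in> {x0..x1}" for x using Dm(2)[OF that] bpos[OF that] by simp
  show ?thesis by (rule that[OF Cm(1) c1 Dm(1) d1])
qed

lemma uniq:
  assumes os: "osol Z W"
    and zd: "\<forall>p\<in>{x0..x1}. (z has_real_derivative z' p) (at p within {x0..x1})"
    and z'c: "continuous_on {x0..x1} z'"
    and bzd: "\<forall>p\<in>{x0<..<x1}. ((\<lambda>q. b q * z' q) has_real_derivative c p * z p) (at p)"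
    and z0: "z x0 = 0" and z'0: "z' x0 = 1"
    and p: "p \<in> {x0..x1}"
  shows "z p = Z p \<and> z' p = W p / b p"
proof -
  obtain Cm Dm where Cm: "Cm \<ge> 0" "\<And>x. x \<in> {x0..x1} \<Longrightarrow> c x \<le> Cm"
    and Dm: "Dm \<ge> 0" "\<And>x. x \<in> {x0..x1} \<Longrightarrow> 1 / b x \<le> Dm" by (meson bounds)
  define K where "K = 1 + Cm + Dm"
  define bz where "bz q = b q * z' q" for q
  define E where "E q = exp (-K*q) * ((z q - Z q)^2 + (bz q - W q)^2)" for q
  have Wc: "continuous_on {x0..x1} W" and Wd: "\<forall>p\<in>{x0..x1}. (W has_real_derivative c p * Z p) (at p within {x0..x1})"
    and Zd: "\<forall>p\<in>{x0..x1}. (Z has_real_derivative W p / b p) (at p within {x0..x1})"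
    and W0: "W x0 = b x0" and Z0: "Z x0 = 0"
    using os unfolding osol_def by auto
  have Ec: "continuous_on {x0..x1} E"
    unfolding E_def bz_def
    by (intro continuous_intros deriv_cont_on[OF zd] osol_Zcont[OF os] bcont z'c Wc)
  have Ed: "\<exists>y. (E has_real_derivative y) (at x) \<and> y \<le> 0" if x: "x0 < x" "x < x1" for x
  proof -
    have xi: "x \<in> {x0..x1}" using x by auto
    have at: "at x within {x0..x1} = at x" using at_within_Icc_at x by blast
    have hz: "(z has_real_derivative z' x) (at x)" using zd xi at by metis
    have hZ: "(Z has_real_derivative W x / b x) (at x)" using Zd xi at by metis
    have hW: "(W has_real_derivative c x * Z x) (at x)" using Wd xi at by metis
    have hbz: "(bz has_real_derivative c x * z x) (at x)" using bzd x unfolding bz_def[abs_def] by auto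
    have bx: "0 < b x" using bpos xi by blast
    define dd where "dd = z x - Z x"
    define ee where "ee = bz x - W x"
    have D: "(E has_real_derivative
        exp (-K*x) * (2 * dd * (z' x - W x / b x) + 2 * ee * (c x * z x - c x * Z x)) - K * exp (-K*x) * (dd^2 + ee^2)) (at x)"
      unfolding E_def[abs_def] dd_def ee_def
      using bx
      by (auto intro!: derivative_eq_intros hz hZ hW hbz simp: field_simps)
    have e1: "z' x - W x / b x = ee / b x" unfolding ee_def bz_def using bx by (simp add: field_simps)
    have "2 * dd * (z' x - W x / b x) + 2 * ee * (c x * z x - c x * Z x) = 2 * dd * ee * (1 / b x + c x)"
      unfolding e1 dd_def by (simp add: algebra_simps)
    also have "\<dots> \<le> \<bar>2 * dd * ee\<bar> * (1 / b x + c x)"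
      by (rule mult_right_mono) (use bx cnn[OF xi] in auto)
    also have "\<dots> \<le> (dd^2 + ee^2) * K"
    proof (rule mult_mono)
      have "0 \<le> (\<bar>dd\<bar> - \<bar>ee\<bar>)^2" by simp
      then show "\<bar>2 * dd * ee\<bar> \<le> dd^2 + ee^2" by (simp add: abs_mult power2_eq_square algebra_simps)
      show "1 / b x + c x \<le> K" using Cm(2)[OF xi] Dm(2)[OF xi] unfolding K_def by simp
    qed (use bx cnn[OF xi] in auto)
    finally have "exp (-K*x) * (2 * dd * (z' x - W x / b x) + 2 * ee * (c x * z x - c x * Z x)) \<le> exp (-K*x) * ((dd^2 + ee^2) * K)"
      by (rule mult_left_mono) simp
    then show ?thesis using D by (intro exI[of _ "exp (-K*x) * (2 * dd * (z' x - W x / b x) + 2 * ee * (c x * z x - c x * Z x)) - K * exp (-K*x) * (dd^2 + ee^2)"]) (auto simp: algebra_simps)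
  qed
  have "E p \<le> E x0"
    by (rule DERIV_nonpos_imp_decreasing_open[of x0 p E]) (use p Ed continuous_on_subset[OF Ec] in auto)
  also have "E x0 = 0" unfolding E_def bz_def using z0 z'0 W0 Z0 by simp
  finally have "E p \<le> 0" .
  then have "(z p - Z p)^2 + (bz p - W p)^2 \<le> 0" unfolding E_def
    by (simp add: mult_le_0_iff)
  then have "z p - Z p = 0" "bz p - W p = 0" by (smt (verit) power2_less_0 zero_le_power2 power_zero_numeral zero_eq_power2)+
  then show ?thesis using bpos[OF p] unfolding bz_def by (simp add: field_simps)
qed

end


lemma lin_lower:
  fixes f f' :: "real \<Rightarrow> real"
  assumes "u \<le> v" "continuous_on {u..v} f"
    "\<And>x. u < x \<Longrightarrow> x < v \<Longrightarrow> (f has_real_derivative f' x) (at x)"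
    "\<And>x. u < x \<Longrightarrow> x < v \<Longrightarrow> m \<le> f' x"
  shows "f u + m * (v - u) \<le> f v"
proof -
  have "(\<lambda>x. f x - m * x) u \<le> (\<lambda>x. f x - m * x) v"
  proof (rule DERIV_nonneg_imp_increasing_open[OF assms(1)])
    fix x assume x: "u < x" "x < v"
    show "\<exists>y. ((\<lambda>x. f x - m * x) has_real_derivative y) (at x) \<and> 0 \<le> y"
      using assms(3,4)[OF x] by (intro exI[of _ "f' x - m"]) (auto intro!: derivative_eq_intros)
  qed (intro continuous_intros assms(2))
  then show ?thesis by (simp add: algebra_simps)
qed

lemma lin_upper:
  fixes f f' :: "real \<Rightarrow> real"
  assumes "u \<le> v" "continuous_on {u..v} f"
    "\<And>x. u < x \<Longrightarrow> x < v \<Longrightarrow> (f has_real_derivative f' x) (at x)"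
    "\<And>x. u < x \<Longrightarrow> x < v \<Longrightarrow> f' x \<le> M"
  shows "f v \<le> f u + M * (v - u)"
proof -
  have "(\<lambda>x. - f x) u + (-M) * (v - u) \<le> (\<lambda>x. - f x) v"
    by (rule lin_lower[OF assms(1), of _ "\<lambda>x. - f' x"]) (use assms(2-4) in \<open>auto intro!: derivative_eq_intros continuous_intros\<close>)
  then show ?thesis by simp
qed

context odeI begin

definition test where
  "test \<phi> \<phi>' \<longleftrightarrow> (\<forall>p\<in>{x0..x1}. (\<phi> has_real_derivative \<phi>' p) (at p within {x0..x1})) \<and>
     continuous_on {x0..x1} \<phi>' \<and> \<phi> x0 = 0 \<and> \<phi> x1 = 1"

definition Qf where
  "Qf \<phi> \<phi>' = integral {x0..x1} (\<lambda>p. b p * (\<phi>' p)^2 + c p * (\<phi> p)^2)"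

lemma at_int: "x0 < x \<Longrightarrow> x < x1 \<Longrightarrow> at x within {x0..x1} = at x"
  using at_within_Icc_at by blast

lemma Z_lower:
  assumes os: "osol Z W"
  obtains m where "m > 0" "\<And>p. p \<in> {x0..x1} \<Longrightarrow> m * (p - x0) \<le> Z p"
proof -
  obtain Bb where Bb: "Bb \<ge> 0" "\<And>x. x \<in> {x0..x1} \<Longrightarrow> norm (b x) \<le> Bb"
    using continuous_on_compact_bound[OF compact_Icc bcont] by blast
  have x0i: "x0 \<in> {x0..x1}" using x01 by auto
  have Bbp: "Bb > 0" using Bb(2)[OF x0i] bpos[OF x0i] by simp
  define m where "m = b x0 / Bb"
  have m: "m > 0" unfolding m_def using b0pos Bbp by simp
  have Zd: "\<forall>p\<in>{x0..x1}. (Z has_real_derivative W p / b p) (at p within {x0..x1})"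
    and Wg: "\<forall>p\<in>{x0..x1}. b x0 \<le> W p" and Z0: "Z x0 = 0" using os unfolding osol_def by auto
  have "m * (p - x0) \<le> Z p" if p: "p \<in> {x0..x1}" for p
  proof -
    have "Z x0 + m * (p - x0) \<le> Z p"
    proof (rule lin_lower[of x0 p Z "\<lambda>x. W x / b x"])
      show "x0 \<le> p" using p by auto
      show "continuous_on {x0..p} Z" by (rule continuous_on_subset[OF osol_Zcont[OF os]]) (use p in auto)
      fix x assume x: "x0 < x" "x < p"
      then have xi: "x \<in> {x0..x1}" and xl: "x < x1" using p by auto
      show "(Z has_real_derivative W x / b x) (at x)" using Zd xi at_int[OF x(1) xl] by metis
      have bx: "0 < b x" "b x \<le> Bb" using bpos[OF xi] Bb(2)[OF xi] by auto
      have "m \<le> b x0 / b x" unfolding m_def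
        by (rule divide_left_mono) (use bx b0pos in auto)
      also have "\<dots> \<le> W x / b x" by (rule divide_right_mono) (use Wg xi bx in auto)
      finally show "m \<le> W x / b x" .
    qed
    then show ?thesis using Z0 by simp
  qed
  then show ?thesis using that m by blast
qed

lemma Z_pos: "osol Z W \<Longrightarrow> p \<in> {x0..x1} \<Longrightarrow> x0 < p \<Longrightarrow> 0 < Z p"
proof -
  assume os: "osol Z W" and p: "p \<in> {x0..x1}" and px: "x0 < p"
  obtain m where m: "m > 0" "\<And>p. p \<in> {x0..x1} \<Longrightarrow> m * (p - x0) \<le> Z p" using Z_lower[OF os] by blast
  have "0 < m * (p - x0)" using m(1) px by simp
  then show ?thesis using m(2)[OF p] by linarith
qed

lemma var_ineq:
  assumes os: "osol Z W" and te: "test \<phi> \<phi>'"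
  shows "W x1 / Z x1 \<le> Qf \<phi> \<phi>'"
proof (rule ccontr)
  assume "\<not> W x1 / Z x1 \<le> Qf \<phi> \<phi>'"
  then have dl: "0 < W x1 / Z x1 - Qf \<phi> \<phi>'" by simp
  define q where "q = W x1 / Z x1"
  define \<delta> where "\<delta> = q - Qf \<phi> \<phi>'"
  have \<delta>: "\<delta> > 0" using dl unfolding \<delta>_def q_def by simp
  have Wc: "continuous_on {x0..x1} W" and Wg: "\<forall>p\<in>{x0..x1}. b x0 \<le> W p" and Z0: "Z x0 = 0"
    and Zd: "\<forall>p\<in>{x0..x1}. (Z has_real_derivative W p / b p) (at p within {x0..x1})"
    and Wd: "\<forall>p\<in>{x0..x1}. (W has_real_derivative c p * Z p) (at p within {x0..x1})"
    using os unfolding osol_def by auto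
  have \<phi>d: "\<forall>p\<in>{x0..x1}. (\<phi> has_real_derivative \<phi>' p) (at p within {x0..x1})"
    and \<phi>'c: "continuous_on {x0..x1} \<phi>'" and \<phi>0: "\<phi> x0 = 0" and \<phi>1: "\<phi> x1 = 1"
    using te unfolding test_def by auto
  have \<phi>c: "continuous_on {x0..x1} \<phi>" using deriv_cont_on[OF \<phi>d] .
  have Zc: "continuous_on {x0..x1} Z" using osol_Zcont[OF os] .
  obtain m where m: "m > 0" "\<And>p. p \<in> {x0..x1} \<Longrightarrow> m * (p - x0) \<le> Z p" using Z_lower[OF os] by blast
  obtain Wm where Wm: "Wm \<ge> 0" "\<And>x. x \<in> {x0..x1} \<Longrightarrow> norm (W x) \<le> Wm"
    using continuous_on_compact_bound[OF compact_Icc Wc] by blast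
  obtain \<Phi> where \<Phi>: "\<Phi> \<ge> 0" "\<And>x. x \<in> {x0..x1} \<Longrightarrow> norm (\<phi>' x) \<le> \<Phi>"
    using continuous_on_compact_bound[OF compact_Icc \<phi>'c] by blast
  define K where "K = (Wm * \<Phi>^2 + 1) / m"
  have "0 \<le> Wm * \<Phi>^2" using Wm(1) by simp
  then have K: "K > 0" unfolding K_def using m(1) by simp
  define \<epsilon> where "\<epsilon> = min ((x1 - x0)/2) (\<delta> / (2*K))"
  have \<epsilon>: "0 < \<epsilon>" "\<epsilon> < x1 - x0" "K * \<epsilon> < \<delta>"
    unfolding \<epsilon>_def using x01 \<delta> K by (auto simp: min_def field_simps)
  define u where "u = x0 + \<epsilon>"
  have u: "x0 < u" "u < x1" using \<epsilon> unfolding u_def by auto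
  define f where "f p = b p * (\<phi>' p)^2 + c p * (\<phi> p)^2" for p
  have fc: "continuous_on {x0..x1} f" unfolding f_def
    by (intro continuous_intros bcont ccont \<phi>'c \<phi>c)
  have fnn: "\<forall>p\<in>{x0..x1}. 0 \<le> f p"
  proof
    fix p assume p: "p \<in> {x0..x1}"
    have "0 < b p" "0 \<le> c p" using bpos cnn p by auto
    then show "0 \<le> f p" unfolding f_def by (intro add_nonneg_nonneg mult_nonneg_nonneg) auto
  qed
  define H where "H p = W p * (\<phi> p)^2 / Z p" for p
  define H' where "H' p = c p * (\<phi> p)^2 + 2 * W p * \<phi> p * \<phi>' p / Z p - (W p)^2 * (\<phi> p)^2 / (b p * (Z p)^2)" for p
  have Zpos: "0 < Z p" if "p \<in> {u..x1}" for p using Z_pos[OF os] that u by auto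
  have FT: "(H' has_integral (H x1 - H u)) {u..x1}"
  proof (rule fundamental_theorem_of_calculus_interior)
    show "u \<le> x1" using u by simp
    have sub: "{u..x1} \<subseteq> {x0..x1}" using u by auto
    show "continuous_on {u..x1} H" unfolding H_def
      by (intro continuous_intros continuous_on_subset[OF Wc sub] continuous_on_subset[OF \<phi>c sub]
          continuous_on_subset[OF Zc sub]) (use Zpos in force)
    fix x assume x: "x \<in> {u<..<x1}"
    then have xi: "x \<in> {x0..x1}" and x0x: "x0 < x" and xx1: "x < x1" using u by auto
    have at: "at x within {x0..x1} = at x" using at_int[OF x0x xx1] .
    have hZ: "(Z has_real_derivative W x / b x) (at x)" using Zd xi at by metis
    have hW: "(W has_real_derivative c x * Z x) (at x)" using Wd xi at by metis
    have h\<phi>: "(\<phi> has_real_derivative \<phi>' x) (at x)" using \<phi>d xi at by metis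
    have Zx: "0 < Z x" using Zpos x by auto
    have bx: "0 < b x" using bpos xi by auto
    have "(H has_real_derivative H' x) (at x)"
      unfolding H_def[abs_def] H'_def
      using Zx bx by (auto intro!: derivative_eq_intros hZ hW h\<phi> simp: field_simps power2_eq_square)
    then show "(H has_vector_derivative H' x) (at x)"
      by (simp add: has_real_derivative_iff_has_vector_derivative)
  qed
  have subu: "{u..x1} \<subseteq> {x0..x1}" using u by auto
  have fint: "f integrable_on {x0..x1}" by (rule integrable_continuous_interval[OF fc])
  have fintu: "f integrable_on {u..x1}" by (rule integrable_continuous_interval[OF continuous_on_subset[OF fc subu]])
  have "H x1 - H u \<le> integral {u..x1} f"
  proof (rule has_integral_le[OF FT integrable_integral[OF fintu]])
    fix x assume x: "x \<in> {u..x1}"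
    then have xi: "x \<in> {x0..x1}" using u by auto
    have Zx: "0 < Z x" using Zpos x by auto
    have bx: "0 < b x" using bpos xi by auto
    have "f x - H' x = b x * (\<phi>' x - W x * \<phi> x / (b x * Z x))^2"
      unfolding f_def H'_def using Zx bx by (simp add: field_simps power2_eq_square)
    also have "\<dots> \<ge> 0" using bx by simp
    finally show "H' x \<le> f x" by simp
  qed
  also have "\<dots> \<le> integral {x0..x1} f" by (rule integral_subset_le[OF subu fintu fint fnn])
  also have "\<dots> = Qf \<phi> \<phi>'" unfolding Qf_def f_def ..
  finally have A: "H x1 - H u \<le> Qf \<phi> \<phi>'" .
  have Hx1: "H x1 = q" unfolding H_def q_def using \<phi>1 by simp
  have ui: "u \<in> {x0..x1}" using u by auto
  have "\<bar>\<phi> u\<bar> \<le> \<Phi> * \<epsilon>"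
  proof -
    have c1: "continuous_on {x0..u} \<phi>" by (rule continuous_on_subset[OF \<phi>c]) (use u in auto)
    have d1: "(\<phi> has_real_derivative \<phi>' x) (at x)" if "x0 < x" "x < u" for x
      using \<phi>d that u at_int[of x] by (metis atLeastAtMost_iff less_imp_le order.strict_trans)
    have b1: "\<phi>' x \<le> \<Phi>" "-\<Phi> \<le> \<phi>' x" if "x0 < x" "x < u" for x
      using \<Phi>(2)[of x] that u by auto
    have "\<phi> u \<le> \<phi> x0 + \<Phi> * (u - x0)" by (rule lin_upper[OF _ c1 d1 b1(1)]) (use u in auto)
    moreover have "\<phi> x0 + (-\<Phi>) * (u - x0) \<le> \<phi> u" by (rule lin_lower[OF _ c1 d1 b1(2)]) (use u in auto)
    ultimately show ?thesis using \<phi>0 unfolding u_def by auto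
  qed
  then have p2: "(\<phi> u)^2 \<le> (\<Phi> * \<epsilon>)^2"
    by (metis abs_ge_zero power2_abs power_mono)
  have Hu: "H u \<le> K * \<epsilon>"
  proof -
    have Zu: "m * \<epsilon> \<le> Z u" using m(2)[OF ui] unfolding u_def by simp
    have Zup: "0 < m * \<epsilon>" using m \<epsilon> by simp
    have Wu: "W u \<le> Wm" using Wm(2)[OF ui] by simp
    have W0: "0 \<le> W u" using Wg ui b0pos by (meson less_imp_le order_trans)
    have "H u \<le> Wm * (\<Phi> * \<epsilon>)^2 / (m * \<epsilon>)"
      unfolding H_def
      by (rule frac_le) (use Wu W0 p2 Zu Zup Wm in \<open>auto intro!: mult_mono\<close>)
    also have "\<dots> = (Wm * \<Phi>^2 / m) * \<epsilon>" using \<epsilon> m by (simp add: field_simps power2_eq_square)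
    also have "\<dots> \<le> K * \<epsilon>" unfolding K_def
      by (rule mult_right_mono) (use m \<epsilon> in \<open>auto simp: divide_right_mono\<close>)
    finally show ?thesis .
  qed
  have "q - K * \<epsilon> \<le> Qf \<phi> \<phi>'" using A Hx1 Hu by simp
  then show False using \<epsilon>(3) unfolding \<delta>_def by simp
qed

lemma var_eq:
  assumes os: "osol Z W"
  shows "test (\<lambda>p. Z p / Z x1) (\<lambda>p. W p / (b p * Z x1)) \<and>
         Qf (\<lambda>p. Z p / Z x1) (\<lambda>p. W p / (b p * Z x1)) = W x1 / Z x1"
proof -
  have Wc: "continuous_on {x0..x1} W" and Z0: "Z x0 = 0" and W0: "W x0 = b x0"
    and Zd: "\<forall>p\<in>{x0..x1}. (Z has_real_derivative W p / b p) (at p within {x0..x1})"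
    and Wd: "\<forall>p\<in>{x0..x1}. (W has_real_derivative c p * Z p) (at p within {x0..x1})"
    using os unfolding osol_def by auto
  have x1i: "x1 \<in> {x0..x1}" using x01 by auto
  have Z1: "0 < Z x1" using Z_pos[OF os x1i x01] .
  have te: "test (\<lambda>p. Z p / Z x1) (\<lambda>p. W p / (b p * Z x1))"
    unfolding test_def
  proof (intro conjI ballI)
    fix p assume p: "p \<in> {x0..x1}"
    have "((\<lambda>p. Z p / Z x1) has_real_derivative (W p / b p) / Z x1) (at p within {x0..x1})"
      by (rule DERIV_cdivide) (use Zd p in blast)
    then show "((\<lambda>p. Z p / Z x1) has_real_derivative W p / (b p * Z x1)) (at p within {x0..x1})"
      by simp
  next
    show "continuous_on {x0..x1} (\<lambda>p. W p / (b p * Z x1))"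
      by (intro continuous_intros Wc bcont) (use bpos Z1 in force)
  qed (use Z0 Z1 in auto)
  have FT: "((\<lambda>p. c p * Z p * Z p + W p / b p * W p) has_integral (W x1 * Z x1 - W x0 * Z x0)) {x0..x1}"
  proof (rule fundamental_theorem_of_calculus)
    show "x0 \<le> x1" using x01 by simp
    fix p assume p: "p \<in> {x0..x1}"
    have "((\<lambda>p. W p * Z p) has_real_derivative c p * Z p * Z p + W p / b p * W p) (at p within {x0..x1})"
      by (rule DERIV_mult[OF Wd[rule_format, OF p] Zd[rule_format, OF p]])
    then show "((\<lambda>p. W p * Z p) has_vector_derivative c p * Z p * Z p + W p / b p * W p) (at p within {x0..x1})"
      by (simp add: has_real_derivative_iff_has_vector_derivative)
  qed
  have "((\<lambda>p. (c p * Z p * Z p + W p / b p * W p) * (1 / (Z x1)^2)) has_integral (W x1 * Z x1 - W x0 * Z x0) * (1 / (Z x1)^2)) {x0..x1}"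
    by (rule has_integral_mult_left[OF FT])
  then have "((\<lambda>p. b p * (W p / (b p * Z x1))^2 + c p * (Z p / Z x1)^2) has_integral W x1 / Z x1) {x0..x1}"
  proof (subst has_integral_cong[symmetric])
    fix p assume p: "p \<in> {x0..x1}"
    show "(c p * Z p * Z p + W p / b p * W p) * (1 / (Z x1)^2) = b p * (W p / (b p * Z x1))^2 + c p * (Z p / Z x1)^2"
      using bpos[OF p] Z1 by (simp add: field_simps power2_eq_square)
  qed (use Z0 Z1 in \<open>simp add: power2_eq_square\<close>)
  then have "Qf (\<lambda>p. Z p / Z x1) (\<lambda>p. W p / (b p * Z x1)) = W x1 / Z x1"
    unfolding Qf_def by (rule integral_unique)
  with te show ?thesis by simp
qed

end


context odeI begin

lemma var_ineq':
  assumes "osol Z W" "\<forall>p\<in>{x0..x1}. (\<phi> has_real_derivative \<phi>' p) (at p within {x0..x1})"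
    "continuous_on {x0..x1} \<phi>'" "\<phi> x0 = 0" "\<phi> x1 = 1"
  shows "W x1 / Z x1 \<le> integral {x0..x1} (\<lambda>p. b p * (\<phi>' p)^2 + c p * (\<phi> p)^2)"
  using var_ineq[OF assms(1)] assms(2-5) unfolding test_def Qf_def by blast

lemma var_eq':
  assumes "osol Z W"
  obtains \<phi> \<phi>' where "\<forall>p\<in>{x0..x1}. (\<phi> has_real_derivative \<phi>' p) (at p within {x0..x1})"
    "continuous_on {x0..x1} \<phi>'" "\<phi> x0 = 0" "\<phi> x1 = 1"
    "integral {x0..x1} (\<lambda>p. b p * (\<phi>' p)^2 + c p * (\<phi> p)^2) = W x1 / Z x1"
  using var_eq[OF assms(1)] unfolding test_def Qf_def
  by (intro that[where \<phi>="\<lambda>p. Z p / Z x1" and \<phi>'="\<lambda>p. W p / (b p * Z x1)"]) auto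

lemma q_pos: "osol Z W \<Longrightarrow> 0 < W x1 / Z x1"
proof -
  assume os: "osol Z W"
  have x1i: "x1 \<in> {x0..x1}" using x01 by auto
  have "0 < Z x1" using Z_pos[OF os x1i x01] .
  moreover have "0 < W x1" using os b0pos x1i unfolding osol_def by force
  ultimately show ?thesis by simp
qed

end

lemma qcompare:
  assumes o1: "odeI x0 x1 b c" and o2: "odeI x0 x1 b' c'"
    and s1: "odeI.osol x0 x1 b c Z W" and s2: "odeI.osol x0 x1 b' c' Z' W'"
    and le: "\<And>p. p \<in> {x0..x1} \<Longrightarrow> k * b p \<le> b' p \<and> k * c p \<le> c' p" and k: "0 \<le> k"
  shows "k * (W x1 / Z x1) \<le> W' x1 / Z' x1"
proof -
  obtain \<phi> \<phi>' where \<phi>d: "\<forall>p\<in>{x0..x1}. (\<phi> has_real_derivative \<phi>' p) (at p within {x0..x1})"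
    and \<phi>'c: "continuous_on {x0..x1} \<phi>'" and \<phi>0: "\<phi> x0 = 0" and \<phi>1: "\<phi> x1 = 1"
    and I2: "integral {x0..x1} (\<lambda>p. b' p * (\<phi>' p)^2 + c' p * (\<phi> p)^2) = W' x1 / Z' x1"
    using odeI.var_eq'[OF o2 s2] by blast
  have I1: "W x1 / Z x1 \<le> integral {x0..x1} (\<lambda>p. b p * (\<phi>' p)^2 + c p * (\<phi> p)^2)"
    by (rule odeI.var_ineq'[OF o1 s1 \<phi>d \<phi>'c \<phi>0 \<phi>1])
  have \<phi>c: "continuous_on {x0..x1} \<phi>" using odeI.deriv_cont_on[OF o1 \<phi>d] .
  have c1: "continuous_on {x0..x1} b" "continuous_on {x0..x1} c" using o1 unfolding odeI_def by auto
  have c2: "continuous_on {x0..x1} b'" "continuous_on {x0..x1} c'" using o2 unfolding odeI_def by auto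
  have "k * integral {x0..x1} (\<lambda>p. b p * (\<phi>' p)^2 + c p * (\<phi> p)^2)
      = integral {x0..x1} (\<lambda>p. k * (b p * (\<phi>' p)^2 + c p * (\<phi> p)^2))" by simp
  also have "\<dots> \<le> integral {x0..x1} (\<lambda>p. b' p * (\<phi>' p)^2 + c' p * (\<phi> p)^2)"
  proof (rule integral_le)
    show "(\<lambda>p. k * (b p * (\<phi>' p)^2 + c p * (\<phi> p)^2)) integrable_on {x0..x1}"
      by (intro integrable_continuous_interval continuous_intros c1 \<phi>c \<phi>'c)
    show "(\<lambda>p. b' p * (\<phi>' p)^2 + c' p * (\<phi> p)^2) integrable_on {x0..x1}"
      by (intro integrable_continuous_interval continuous_intros c2 \<phi>c \<phi>'c)
    fix p assume p: "p \<in> {x0..x1}"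
    have "k * b p * (\<phi>' p)^2 \<le> b' p * (\<phi>' p)^2" by (rule mult_right_mono) (use le[OF p] in auto)
    moreover have "k * c p * (\<phi> p)^2 \<le> c' p * (\<phi> p)^2" by (rule mult_right_mono) (use le[OF p] in auto)
    ultimately show "k * (b p * (\<phi>' p)^2 + c p * (\<phi> p)^2) \<le> b' p * (\<phi>' p)^2 + c' p * (\<phi> p)^2"
      by (simp add: algebra_simps)
  qed
  finally have "k * integral {x0..x1} (\<lambda>p. b p * (\<phi>' p)^2 + c p * (\<phi> p)^2) \<le> W' x1 / Z' x1" using I2 by simp
  moreover have "k * (W x1 / Z x1) \<le> k * integral {x0..x1} (\<lambda>p. b p * (\<phi>' p)^2 + c p * (\<phi> p)^2)"
    by (rule mult_left_mono[OF I1 k])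
  ultimately show ?thesis by linarith
qed

lemma qconcave:
  assumes o1: "odeI x0 x1 b c1" and o2: "odeI x0 x1 b c2" and o: "odeI x0 x1 b c"
    and s1: "odeI.osol x0 x1 b c1 Z1 W1" and s2: "odeI.osol x0 x1 b c2 Z2 W2" and s: "odeI.osol x0 x1 b c Z W"
    and ceq: "\<And>p. p \<in> {x0..x1} \<Longrightarrow> c p = t * c1 p + (1 - t) * c2 p" and t: "0 \<le> t" "t \<le> 1"
  shows "t * (W1 x1 / Z1 x1) + (1 - t) * (W2 x1 / Z2 x1) \<le> W x1 / Z x1"
proof -
  obtain \<phi> \<phi>' where \<phi>d: "\<forall>p\<in>{x0..x1}. (\<phi> has_real_derivative \<phi>' p) (at p within {x0..x1})"
    and \<phi>'c: "continuous_on {x0..x1} \<phi>'" and \<phi>0: "\<phi> x0 = 0" and \<phi>1: "\<phi> x1 = 1"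
    and I: "integral {x0..x1} (\<lambda>p. b p * (\<phi>' p)^2 + c p * (\<phi> p)^2) = W x1 / Z x1"
    using odeI.var_eq'[OF o s] by blast
  have I1: "W1 x1 / Z1 x1 \<le> integral {x0..x1} (\<lambda>p. b p * (\<phi>' p)^2 + c1 p * (\<phi> p)^2)"
    by (rule odeI.var_ineq'[OF o1 s1 \<phi>d \<phi>'c \<phi>0 \<phi>1])
  have I2: "W2 x1 / Z2 x1 \<le> integral {x0..x1} (\<lambda>p. b p * (\<phi>' p)^2 + c2 p * (\<phi> p)^2)"
    by (rule odeI.var_ineq'[OF o2 s2 \<phi>d \<phi>'c \<phi>0 \<phi>1])
  have \<phi>c: "continuous_on {x0..x1} \<phi>" using odeI.deriv_cont_on[OF o1 \<phi>d] .
  have cc: "continuous_on {x0..x1} b" "continuous_on {x0..x1} c1" "continuous_on {x0..x1} c2"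
    using o1 o2 unfolding odeI_def by auto
  have i1: "(\<lambda>p. b p * (\<phi>' p)^2 + c1 p * (\<phi> p)^2) integrable_on {x0..x1}"
    by (intro integrable_continuous_interval continuous_intros cc \<phi>c \<phi>'c)
  have i2: "(\<lambda>p. b p * (\<phi>' p)^2 + c2 p * (\<phi> p)^2) integrable_on {x0..x1}"
    by (intro integrable_continuous_interval continuous_intros cc \<phi>c \<phi>'c)
  have "integral {x0..x1} (\<lambda>p. b p * (\<phi>' p)^2 + c p * (\<phi> p)^2)
      = integral {x0..x1} (\<lambda>p. t * (b p * (\<phi>' p)^2 + c1 p * (\<phi> p)^2) + (1 - t) * (b p * (\<phi>' p)^2 + c2 p * (\<phi> p)^2))"
    by (rule integral_cong) (simp add: ceq algebra_simps)
  also have "\<dots> = t * integral {x0..x1} (\<lambda>p. b p * (\<phi>' p)^2 + c1 p * (\<phi> p)^2)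
       + (1 - t) * integral {x0..x1} (\<lambda>p. b p * (\<phi>' p)^2 + c2 p * (\<phi> p)^2)"
    apply (subst integral_add)
      apply (rule integrable_on_mult_right[OF i1])
     apply (rule integrable_on_mult_right[OF i2])
    apply simp
    done
  finally have E: "W x1 / Z x1 = t * integral {x0..x1} (\<lambda>p. b p * (\<phi>' p)^2 + c1 p * (\<phi> p)^2)
       + (1 - t) * integral {x0..x1} (\<lambda>p. b p * (\<phi>' p)^2 + c2 p * (\<phi> p)^2)" using I by simp
  have "t * (W1 x1 / Z1 x1) \<le> t * integral {x0..x1} (\<lambda>p. b p * (\<phi>' p)^2 + c1 p * (\<phi> p)^2)"
    by (rule mult_left_mono[OF I1 t(1)])
  moreover have "(1 - t) * (W2 x1 / Z2 x1) \<le> (1 - t) * integral {x0..x1} (\<lambda>p. b p * (\<phi>' p)^2 + c2 p * (\<phi> p)^2)"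
    by (rule mult_left_mono[OF I2]) (use t in simp)
  ultimately show ?thesis using E by linarith
qed

lemma qlower:
  assumes o: "odeI x0 x1 b c" and s: "odeI.osol x0 x1 b c Z W"
    and bl: "\<And>p. p \<in> {x0..x1} \<Longrightarrow> B \<le> b p" and B: "0 \<le> B"
  shows "B / (x1 - x0) \<le> W x1 / Z x1"
proof -
  obtain \<phi> \<phi>' where \<phi>d: "\<forall>p\<in>{x0..x1}. (\<phi> has_real_derivative \<phi>' p) (at p within {x0..x1})"
    and \<phi>'c: "continuous_on {x0..x1} \<phi>'" and \<phi>0: "\<phi> x0 = 0" and \<phi>1: "\<phi> x1 = 1"
    and I: "integral {x0..x1} (\<lambda>p. b p * (\<phi>' p)^2 + c p * (\<phi> p)^2) = W x1 / Z x1"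
    using odeI.var_eq'[OF o s] by blast
  have x01: "x0 < x1" using o unfolding odeI_def by auto
  define L where "L = x1 - x0"
  have L: "L > 0" unfolding L_def using x01 by simp
  have \<phi>c: "continuous_on {x0..x1} \<phi>" using odeI.deriv_cont_on[OF o \<phi>d] .
  have cc: "continuous_on {x0..x1} b" "continuous_on {x0..x1} c" and cnn: "\<And>p. p \<in> {x0..x1} \<Longrightarrow> 0 \<le> c p"
    using o unfolding odeI_def by auto
  have F: "(\<phi>' has_integral (\<phi> x1 - \<phi> x0)) {x0..x1}"
    by (rule fundamental_theorem_of_calculus) (use x01 \<phi>d in \<open>auto simp: has_real_derivative_iff_has_vector_derivative[symmetric]\<close>)
  have i\<phi>: "\<phi>' integrable_on {x0..x1}" using F by blast
  have int\<phi>: "integral {x0..x1} \<phi>' = 1" using F \<phi>0 \<phi>1 by (simp add: integral_unique)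
  have iq: "(\<lambda>p. (\<phi>' p)^2) integrable_on {x0..x1}" by (intro integrable_continuous_interval continuous_intros \<phi>'c)
  have "0 \<le> integral {x0..x1} (\<lambda>p. (\<phi>' p - 1 / L)^2)"
    by (rule integral_nonneg) (auto intro!: integrable_continuous_interval continuous_intros \<phi>'c)
  also have "integral {x0..x1} (\<lambda>p. (\<phi>' p - 1 / L)^2)
     = integral {x0..x1} (\<lambda>p. (\<phi>' p)^2) - (2 / L) * integral {x0..x1} \<phi>' + integral {x0..x1} (\<lambda>p. 1 / L^2)"
  proof -
    have "integral {x0..x1} (\<lambda>p. (\<phi>' p - 1 / L)^2) = integral {x0..x1} (\<lambda>p. ((\<phi>' p)^2 - (2 / L) * \<phi>' p) + 1 / L^2)"
      by (rule integral_cong) (simp add: power2_eq_square algebra_simps)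
    also have "\<dots> = integral {x0..x1} (\<lambda>p. (\<phi>' p)^2 - (2 / L) * \<phi>' p) + integral {x0..x1} (\<lambda>p. 1 / L^2)"
      by (rule integral_add[OF integrable_diff[OF iq integrable_on_mult_right[OF i\<phi>]]]) (rule integrable_const_ivl)
    also have "integral {x0..x1} (\<lambda>p. (\<phi>' p)^2 - (2 / L) * \<phi>' p) = integral {x0..x1} (\<lambda>p. (\<phi>' p)^2) - (2 / L) * integral {x0..x1} \<phi>'"
      by (subst integral_diff[OF iq integrable_on_mult_right[OF i\<phi>]]) simp
    finally show ?thesis .
  qed
  also have "integral {x0..x1} (\<lambda>p. 1 / L^2) = 1 / L"
    using L unfolding L_def by (simp add: power2_eq_square)
  finally have q1: "1 / L \<le> integral {x0..x1} (\<lambda>p. (\<phi>' p)^2)" using int\<phi> L by (simp add: field_simps)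
  have "B / L = B * (1 / L)" by simp
  also have "\<dots> \<le> B * integral {x0..x1} (\<lambda>p. (\<phi>' p)^2)" by (rule mult_left_mono[OF q1 B])
  also have "\<dots> = integral {x0..x1} (\<lambda>p. B * (\<phi>' p)^2)" by simp
  also have "\<dots> \<le> integral {x0..x1} (\<lambda>p. b p * (\<phi>' p)^2 + c p * (\<phi> p)^2)"
  proof (rule integral_le)
    show "(\<lambda>p. B * (\<phi>' p)^2) integrable_on {x0..x1}" using iq by (rule integrable_on_mult_right)
    show "(\<lambda>p. b p * (\<phi>' p)^2 + c p * (\<phi> p)^2) integrable_on {x0..x1}"
      by (intro integrable_continuous_interval continuous_intros cc \<phi>c \<phi>'c)
    fix p assume p: "p \<in> {x0..x1}"
    have "B * (\<phi>' p)^2 \<le> b p * (\<phi>' p)^2" by (rule mult_right_mono) (use bl[OF p] in auto)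
    moreover have "0 \<le> c p * (\<phi> p)^2" using cnn[OF p] by simp
    ultimately show "B * (\<phi>' p)^2 \<le> b p * (\<phi>' p)^2 + c p * (\<phi> p)^2" by linarith
  qed
  finally show ?thesis using I unfolding L_def by simp
qed



lemma holder_cont:
  assumes a: "0 < \<alpha>" and h: "holder_on \<alpha> S f"
  shows "continuous_on S f"
proof -
  obtain C where C: "\<forall>x\<in>S. \<forall>y\<in>S. \<bar>f x - f y\<bar> \<le> C * \<bar>x - y\<bar> powr \<alpha>"
    using h unfolding holder_on_def by blast
  define C' where "C' = \<bar>C\<bar> + 1"
  have C': "C' > 0" unfolding C'_def by simp
  show ?thesis unfolding continuous_on_iff
  proof (intro ballI allI impI)
    fix x e assume x: "x \<in> S" and e: "(0::real) < e"
    define d where "d = (e / C') powr (1/\<alpha>)"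
    have d: "d > 0" unfolding d_def using e C' by simp
    have dd: "d powr \<alpha> = e / C'" unfolding d_def using a e C' by (simp add: powr_powr)
    show "\<exists>d>0. \<forall>x'\<in>S. dist x' x < d \<longrightarrow> dist (f x') (f x) < e"
    proof (intro exI[of _ d] conjI ballI impI)
      show "0 < d" by (rule d)
    next
      fix x' assume x': "x' \<in> S" and dx: "dist x' x < d"
      have "\<bar>x' - x\<bar> powr \<alpha> < d powr \<alpha>"
        by (rule powr_less_mono2[OF a]) (use dx in \<open>auto simp: dist_real_def\<close>)
      then have lt: "\<bar>x' - x\<bar> powr \<alpha> < e / C'" using dd by simp
      have "\<bar>f x' - f x\<bar> \<le> C * \<bar>x' - x\<bar> powr \<alpha>" using C x x' by blast
      also have "\<dots> \<le> C' * \<bar>x' - x\<bar> powr \<alpha>"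
        by (rule mult_right_mono) (auto simp: C'_def)
      also have "\<dots> < C' * (e / C')" by (rule mult_strict_left_mono[OF lt C'])
      also have "\<dots> = e" using C' by simp
      finally show "dist (f x') (f x) < e" by (simp add: dist_real_def)
    qed
  qed
qed

lemma sqrt_le_self: "1 \<le> (R::real) \<Longrightarrow> sqrt R \<le> R"
proof -
  assume R: "1 \<le> R"
  have "R \<le> R * R" using R by (simp add: mult_le_cancel_left1)
  then have "sqrt R \<le> sqrt (R * R)" by (rule real_sqrt_le_mono)
  also have "\<dots> = R" using R by (simp add: real_sqrt_abs2)
  finally show ?thesis .
qed

lemma cube_cmp:
  fixes A A' R :: real
  assumes A: "0 < A" "A \<le> A'" "A' \<le> R * A" "1 \<le> R"
  shows "sqrt A ^ 3 \<le> sqrt A' ^ 3 \<and> sqrt A' ^ 3 \<le> R^2 * sqrt A ^ 3 \<and> sqrt A \<le> sqrt A' \<and> sqrt A' \<le> R * sqrt A"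
proof -
  define s where "s = sqrt A"
  define s' where "s' = sqrt A'"
  have sp: "0 < s" unfolding s_def using A by simp
  have ss: "s \<le> s'" unfolding s_def s'_def using A by simp
  have "s' \<le> sqrt (R * A)" unfolding s'_def using A by simp
  also have "\<dots> = sqrt R * s" unfolding s_def by (simp add: real_sqrt_mult)
  also have "\<dots> \<le> R * s" by (rule mult_right_mono[OF sqrt_le_self[OF A(4)]]) (use sp in simp)
  finally have s'R: "s' \<le> R * s" .
  have As: "A = s^2" "A' = s'^2" unfolding s_def s'_def using A by auto
  have c1: "s ^ 3 \<le> s' ^ 3" by (rule power_mono[OF ss]) (use sp in simp)
  have "s' ^ 3 = s' * A'" using As by (simp add: power2_eq_square power3_eq_cube)
  also have "\<dots> \<le> (R * s) * (R * A)"
    by (rule mult_mono[OF s'R A(3)]) (use sp A in auto)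
  also have "\<dots> = R^2 * s^3" using As by (simp add: power2_eq_square power3_eq_cube)
  finally show ?thesis using c1 ss s'R unfolding s_def s'_def by simp
qed

lemma cube_low:
  fixes A A' \<rho> :: real
  assumes hA: "0 < A" and hr: "\<rho> * A \<le> A'" and h1: "1 \<le> \<rho>"
  shows "sqrt \<rho> * sqrt A ^ 3 \<le> sqrt A' ^ 3 \<and> sqrt \<rho> * sqrt A \<le> sqrt A'"
proof -
  have r1: "1 \<le> sqrt \<rho>" using h1 by simp
  have sA: "0 < sqrt A" using hA by simp
  have "sqrt \<rho> * sqrt A = sqrt (\<rho> * A)" by (simp add: real_sqrt_mult)
  also have "\<dots> \<le> sqrt A'" using hr by simp
  finally have l: "sqrt \<rho> * sqrt A \<le> sqrt A'" .
  have "sqrt \<rho> \<le> sqrt \<rho> ^ 3" using r1 power_increasing[of 1 3 "sqrt \<rho>"] by simp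
  then have "sqrt \<rho> * sqrt A ^ 3 \<le> sqrt \<rho> ^ 3 * sqrt A ^ 3"
    by (rule mult_right_mono) (use sA in simp)
  also have "\<dots> = (sqrt \<rho> * sqrt A) ^ 3" by (simp add: power_mult_distrib)
  also have "\<dots> \<le> sqrt A' ^ 3" by (rule power_mono[OF l]) (use sA r1 in simp)
  finally show ?thesis using l by simp
qed



locale setting =
  fixes g \<sigma> p0 p1 \<alpha> :: real and \<gamma>1 \<gamma>2 :: "real \<Rightarrow> real"
  assumes g: "g > 0" and \<sigma>: "\<sigma> > 0" and p01: "p0 < p1" and p10: "p1 < 0" and \<alpha>: "0 < \<alpha>"
    and h1: "holder_on \<alpha> {p0..p1} \<gamma>1" and h2: "holder_on \<alpha> {p1..0} \<gamma>2"
begin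

abbreviation "\<gamma> \<equiv> gam p1 \<gamma>1 \<gamma>2"
abbreviation "\<Gamma> \<equiv> Gam \<gamma>"

lemma p00: "p0 < 0" using p01 p10 by simp

lemma gam_bound: "\<exists>Bg>0. \<forall>p\<in>{p0..0}. \<bar>\<gamma> p\<bar> \<le> Bg"
proof -
  obtain B1 where B1: "B1 \<ge> 0" "\<And>x. x \<in> {p0..p1} \<Longrightarrow> norm (\<gamma>1 x) \<le> B1"
    using continuous_on_compact_bound[OF compact_Icc holder_cont[OF \<alpha> h1]] by blast
  obtain B2 where B2: "B2 \<ge> 0" "\<And>x. x \<in> {p1..0} \<Longrightarrow> norm (\<gamma>2 x) \<le> B2"
    using continuous_on_compact_bound[OF compact_Icc holder_cont[OF \<alpha> h2]] by blast
  show ?thesis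
  proof (intro exI[of _ "B1 + B2 + 1"] conjI ballI)
    show "0 < B1 + B2 + 1" using B1 B2 by simp
    fix p assume p: "p \<in> {p0..0}"
    show "\<bar>\<gamma> p\<bar> \<le> B1 + B2 + 1"
    proof (cases "p < p1")
      case True
      then have "\<bar>\<gamma>1 p\<bar> \<le> B1" using B1(2)[of p] p by auto
      then show ?thesis using True B2 by (simp add: gam_def)
    next
      case False
      then have "\<bar>\<gamma>2 p\<bar> \<le> B2" using B2(2)[of p] p by auto
      then show ?thesis using False B1 by (simp add: gam_def)
    qed
  qed
qed

definition Bg where "Bg = (SOME B. B > 0 \<and> (\<forall>p\<in>{p0..0}. \<bar>\<gamma> p\<bar> \<le> B))"

lemma Bg: "Bg > 0" "\<And>p. p \<in> {p0..0} \<Longrightarrow> \<bar>\<gamma> p\<bar> \<le> Bg"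
  using someI_ex[OF gam_bound] unfolding Bg_def by auto

lemma gam_int: "\<gamma> integrable_on {p0..0}"
proof (rule Henstock_Kurzweil_Integration.integrable_combine[where a=p0 and c=p1 and b=0])
  show "p0 \<le> p1" "p1 \<le> 0" using p01 p10 by auto
  show "\<gamma> integrable_on {p0..p1}"
    by (rule integrable_spike_finite[where S="{p1}" and f=\<gamma>1])
       (auto simp: gam_def intro!: integrable_continuous_interval holder_cont[OF \<alpha> h1])
  show "\<gamma> integrable_on {p1..0}"
    by (rule integrable_spike_finite[where S="{}" and f=\<gamma>2])
       (auto simp: gam_def intro!: integrable_continuous_interval holder_cont[OF \<alpha> h2])
qed

lemma gam_int_sub: "p0 \<le> p \<Longrightarrow> p \<le> q \<Longrightarrow> q \<le> 0 \<Longrightarrow> \<gamma> integrable_on {p..q}"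
  by (rule integrable_subinterval_real[OF gam_int]) auto

lemma Gam_eq: "p \<le> 0 \<Longrightarrow> \<Gamma> p = - integral {p..0} \<gamma>"
  by (cases "p = 0") (auto simp: Gam_def)

lemma Gam0: "\<Gamma> 0 = 0" by (simp add: Gam_def)

lemma Gam_diff: "p0 \<le> p \<Longrightarrow> p \<le> q \<Longrightarrow> q \<le> 0 \<Longrightarrow> \<Gamma> q - \<Gamma> p = integral {p..q} \<gamma>"
proof -
  assume a: "p0 \<le> p" "p \<le> q" "q \<le> 0"
  have "integral {p..q} \<gamma> + integral {q..0} \<gamma> = integral {p..0} \<gamma>"
    by (rule Henstock_Kurzweil_Integration.integral_combine[where a=p and c=q and b=0]) (use a gam_int_sub in auto)
  then show ?thesis using Gam_eq a by simp
qed

lemma Gam_lip: "p \<in> {p0..0} \<Longrightarrow> q \<in> {p0..0} \<Longrightarrow> \<bar>\<Gamma> q - \<Gamma> p\<bar> \<le> Bg * \<bar>q - p\<bar>"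
proof -
  have key: "\<bar>\<Gamma> q - \<Gamma> p\<bar> \<le> Bg * \<bar>q - p\<bar>" if a: "p0 \<le> p" "p \<le> q" "q \<le> 0" for p q
  proof -
    have i: "\<gamma> integrable_on {p..q}" using gam_int_sub a by auto
    have bx: "\<bar>\<gamma> x\<bar> \<le> Bg" if "x \<in> {p..q}" for x using Bg(2)[of x] a that by auto
    have "integral {p..q} \<gamma> \<le> integral {p..q} (\<lambda>_. Bg)"
      by (rule integral_le[OF i]) (use bx in \<open>auto simp: abs_le_iff\<close>)
    moreover have "integral {p..q} (\<lambda>_. - Bg) \<le> integral {p..q} \<gamma>"
      by (rule integral_le[OF _ i]) (use bx in \<open>force simp: abs_le_iff\<close>)+
    ultimately have "\<bar>integral {p..q} \<gamma>\<bar> \<le> Bg * (q - p)" using a by (simp add: abs_le_iff algebra_simps)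
    then show ?thesis using Gam_diff[OF a] a by simp
  qed
  assume "p \<in> {p0..0}" "q \<in> {p0..0}"
  then show ?thesis using key[of p q] key[of q p] by (cases "p \<le> q") (auto simp: abs_minus_commute)
qed

lemma Gam_cont: "continuous_on {p0..0} \<Gamma>"
proof -
  have "Bg-lipschitz_on {p0..0} \<Gamma>"
    unfolding lipschitz_on_def using Gam_lip Bg(1) by (auto simp: dist_real_def)
  then show ?thesis by (rule lipschitz_on_continuous_on)
qed

lemma Gam_low: "p \<in> {p0..0} \<Longrightarrow> - (Bg * (- p0)) \<le> \<Gamma> p"
proof -
  assume p: "p \<in> {p0..0}"
  have "\<bar>\<Gamma> 0 - \<Gamma> p\<bar> \<le> Bg * \<bar>0 - p\<bar>" using Gam_lip[OF p, of 0] p00 by auto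
  moreover have "Bg * \<bar>0 - p\<bar> \<le> Bg * (- p0)" using p Bg(1) by (auto intro!: mult_left_mono)
  ultimately show ?thesis using Gam0 by simp
qed

definition M where "M = Sup (\<Gamma> ` {p0..0})"

lemma M_attained: "\<exists>ps\<in>{p0..0}. \<Gamma> ps = M \<and> (\<forall>p\<in>{p0..0}. \<Gamma> p \<le> M)"
proof -
  obtain ps where ps: "ps \<in> {p0..0}" "\<forall>y\<in>{p0..0}. \<Gamma> y \<le> \<Gamma> ps"
    using continuous_attains_sup[OF compact_Icc _ Gam_cont] p00 by auto
  have "M = \<Gamma> ps" unfolding M_def
    by (rule cSup_eq_maximum) (use ps in auto)
  then show ?thesis using ps by auto
qed

lemma M_ge: "p \<in> {p0..0} \<Longrightarrow> \<Gamma> p \<le> M" using M_attained by blast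

lemma M_nonneg: "0 \<le> M" using M_ge[of 0] Gam0 p00 by auto

end


context setting begin

definition Ii where "Ii l = integral {p0..0} (\<lambda>p. 1 / aa \<gamma> l p ^ 3)"

lemma A_low: "p \<in> {p0..0} \<Longrightarrow> l - 2 * M \<le> l - 2 * \<Gamma> p" using M_ge by force
lemma A_up: "p \<in> {p0..0} \<Longrightarrow> l - 2 * \<Gamma> p \<le> l + 2 * (Bg * (- p0))" using Gam_low by force

lemma aa_pos: "2 * M < l \<Longrightarrow> p \<in> {p0..0} \<Longrightarrow> 0 < aa \<gamma> l p"
  unfolding aa_def using A_low[of p l] by simp

lemma aa_cont: "continuous_on {p0..0} (aa \<gamma> l)"
  unfolding aa_def[abs_def] by (intro continuous_intros Gam_cont)

lemma inv_cont: "2 * M < l \<Longrightarrow> continuous_on {p0..0} (\<lambda>p. 1 / aa \<gamma> l p ^ 3)"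
  by (intro continuous_intros aa_cont) (use aa_pos in force)

lemma inv_int: "2 * M < l \<Longrightarrow> (\<lambda>p. 1 / aa \<gamma> l p ^ 3) integrable_on {p0..0}"
  by (rule integrable_continuous_interval[OF inv_cont])

lemma Am_pos: "2 * M < l \<Longrightarrow> 0 < l + 2 * (Bg * (- p0))"
proof -
  assume l: "2 * M < l"
  have "0 < Bg * (- p0)" using Bg(1) p00 by (intro mult_pos_pos) auto
  then show ?thesis using l M_nonneg by linarith
qed

lemma Ii_pos: "2 * M < l \<Longrightarrow> 0 < Ii l"
proof -
  assume l: "2 * M < l"
  define s where "s = sqrt (l + 2 * (Bg * (- p0)))"
  have s: "0 < s" unfolding s_def using Am_pos[OF l] by simp
  have "integral {p0..0} (\<lambda>p. 1 / s ^ 3) \<le> Ii l"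
    unfolding Ii_def
  proof (rule integral_le[OF _ inv_int[OF l]])
    show "(\<lambda>p. 1 / s ^ 3) integrable_on {p0..0}" by (rule integrable_continuous_interval[OF continuous_on_const])
    fix p assume p: "p \<in> {p0..0}"
    have ap: "0 < aa \<gamma> l p" using aa_pos[OF l p] .
    have "aa \<gamma> l p \<le> s" unfolding aa_def s_def using A_up[OF p, of l] by simp
    then have "aa \<gamma> l p ^ 3 \<le> s ^ 3" by (rule power_mono) (use ap in simp)
    then show "1 / s ^ 3 \<le> 1 / aa \<gamma> l p ^ 3" by (rule divide_left_mono) (use ap s in auto)
  qed
  moreover have "integral {p0..0} (\<lambda>p. 1 / s ^ 3) = (- p0) / s ^ 3" using p00 by simp
  moreover have "0 < (- p0) / s ^ 3" using p00 s by (intro divide_pos_pos) auto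
  ultimately show ?thesis by linarith
qed

lemma Ii_strict: "2 * M < l \<Longrightarrow> l < l' \<Longrightarrow> Ii l' < Ii l"
proof -
  assume l: "2 * M < l" and ll: "l < l'"
  have l': "2 * M < l'" using l ll by simp
  define Am where "Am = l + 2 * (Bg * (- p0))"
  have Am: "0 < Am" unfolding Am_def using Am_pos[OF l] .
  define \<rho> where "\<rho> = 1 + (l' - l) / Am"
  have \<rho>: "1 < \<rho>" unfolding \<rho>_def using Am ll by simp
  have sr: "1 < sqrt \<rho>" using \<rho> by simp
  have "Ii l' \<le> integral {p0..0} (\<lambda>p. (1 / sqrt \<rho>) * (1 / aa \<gamma> l p ^ 3))"
    unfolding Ii_def
  proof (rule integral_le[OF inv_int[OF l'] integrable_on_mult_right[OF inv_int[OF l]]])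
    fix p assume p: "p \<in> {p0..0}"
    define A where "A = l - 2 * \<Gamma> p"
    have A: "0 < A" unfolding A_def using A_low[OF p, of l] l by simp
    have AAm: "A \<le> Am" unfolding A_def Am_def using A_up[OF p] by simp
    have "\<rho> * A = A + (l' - l) * (A / Am)" unfolding \<rho>_def using Am by (simp add: field_simps)
    also have "\<dots> \<le> A + (l' - l) * 1"
      by (rule add_left_mono, rule mult_left_mono) (use AAm Am ll A in auto)
    finally have rA: "\<rho> * A \<le> l' - 2 * \<Gamma> p" unfolding A_def by simp
    have c: "sqrt \<rho> * sqrt A ^ 3 \<le> sqrt (l' - 2 * \<Gamma> p) ^ 3"
      using cube_low[OF A rA] \<rho> by simp
    have a3: "0 < sqrt A ^ 3" using A by simp
    have pr: "0 < sqrt \<rho> * sqrt A ^ 3" using a3 sr by simp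
    have pos: "0 < sqrt (l' - 2 * \<Gamma> p) ^ 3" using pr c by linarith
    have "1 / aa \<gamma> l' p ^ 3 \<le> 1 / (sqrt \<rho> * sqrt A ^ 3)"
      unfolding aa_def by (rule divide_left_mono[OF c]) (use pr pos in auto)
    also have "\<dots> = (1 / sqrt \<rho>) * (1 / aa \<gamma> l p ^ 3)" unfolding aa_def A_def by simp
    finally show "1 / aa \<gamma> l' p ^ 3 \<le> (1 / sqrt \<rho>) * (1 / aa \<gamma> l p ^ 3)" .
  qed
  also have "\<dots> = (1 / sqrt \<rho>) * Ii l" unfolding Ii_def by (rule integral_mult_right)
  also have "\<dots> < 1 * Ii l" by (rule mult_strict_right_mono) (use sr Ii_pos[OF l] in auto)
  finally show ?thesis by simp
qed

lemma Ii_le: "2 * M < l \<Longrightarrow> l \<le> l' \<Longrightarrow> Ii l' \<le> Ii l"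
  using Ii_strict by (cases "l = l'") (auto intro: less_imp_le)

lemma Ii_R:
  assumes l1: "2 * M < l1" and ll: "l1 \<le> l" "l \<le> l'"
  shows "Ii l \<le> (1 + (l' - l) / (l1 - 2 * M))^2 * Ii l'"
proof -
  define R where "R = 1 + (l' - l) / (l1 - 2 * M)"
  have l: "2 * M < l" "2 * M < l'" using l1 ll by auto
  have R1: "1 \<le> R" unfolding R_def using l1 ll by simp
  have "Ii l \<le> integral {p0..0} (\<lambda>p. R^2 * (1 / aa \<gamma> l' p ^ 3))"
    unfolding Ii_def
  proof (rule integral_le[OF inv_int[OF l(1)] integrable_on_mult_right[OF inv_int[OF l(2)]]])
    fix p assume p: "p \<in> {p0..0}"
    define A where "A = l - 2 * \<Gamma> p"
    have A: "0 < A" unfolding A_def using A_low[OF p, of l] l by simp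
    have Ad: "l1 - 2 * M \<le> A" unfolding A_def using A_low[OF p, of l] ll by simp
    have "l' - 2 * \<Gamma> p = A + (l' - l)" unfolding A_def by simp
    also have "\<dots> \<le> A + (l' - l) * (A / (l1 - 2 * M))"
    proof -
      have "1 \<le> A / (l1 - 2 * M)" using Ad l1 by simp
      then have "(l' - l) * 1 \<le> (l' - l) * (A / (l1 - 2 * M))" by (rule mult_left_mono) (use ll in simp)
      then show ?thesis by simp
    qed
    also have "\<dots> = R * A" unfolding R_def using l1 by (simp add: field_simps)
    finally have AR: "l' - 2 * \<Gamma> p \<le> R * A" .
    have AA: "A \<le> l' - 2 * \<Gamma> p" unfolding A_def using ll by simp
    have c: "sqrt (l' - 2 * \<Gamma> p) ^ 3 \<le> R^2 * sqrt A ^ 3" using cube_cmp[OF A AA AR R1] by simp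
    have a3: "0 < sqrt (l' - 2 * \<Gamma> p) ^ 3" using A AA by simp
    have a4: "0 < R^2 * sqrt A ^ 3" using A R1 by simp
    have "1 / aa \<gamma> l p ^ 3 = R^2 * (1 / (R^2 * sqrt A ^ 3))" unfolding aa_def A_def using R1 by simp
    also have "\<dots> \<le> R^2 * (1 / aa \<gamma> l' p ^ 3)"
      unfolding aa_def
      by (rule mult_left_mono, rule divide_left_mono[OF c]) (use a3 a4 R1 in auto)
    finally show "1 / aa \<gamma> l p ^ 3 \<le> R^2 * (1 / aa \<gamma> l' p ^ 3)" .
  qed
  also have "\<dots> = R^2 * Ii l'" unfolding Ii_def by (rule integral_mult_right)
  finally show ?thesis unfolding R_def .
qed

lemma Ii_lip:
  assumes l1: "2 * M < l1"
  shows "(2 * Ii l1 / (l1 - 2 * M))-lipschitz_on {l1..} Ii"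
proof -
  define d where "d = l1 - 2 * M"
  have d: "0 < d" unfolding d_def using l1 by simp
  have key: "\<bar>Ii l - Ii l'\<bar> \<le> 2 * Ii l1 / d * \<bar>l - l'\<bar>" if ll: "l1 \<le> l" "l \<le> l'" for l l'
  proof -
    define R where "R = 1 + (l' - l) / d"
    have R1: "1 \<le> R" unfolding R_def using d ll by simp
    have l: "2 * M < l" using l1 ll by simp
    have I1: "Ii l \<le> R^2 * Ii l'" using Ii_R[OF l1 ll] unfolding R_def d_def .
    have I2: "Ii l' \<le> Ii l" using Ii_le[OF l ll(2)] .
    have I3: "Ii l \<le> Ii l1" using Ii_le[OF l1 ll(1)] .
    have Ip: "0 < Ii l" using Ii_pos[OF l] .
    have "Ii l - Ii l' \<le> Ii l - Ii l / R^2"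
    proof -
      have "Ii l / R^2 \<le> Ii l'" using I1 R1 by (simp add: field_simps)
      then show ?thesis by simp
    qed
    also have "\<dots> = Ii l * ((R^2 - 1) / R^2)" using R1 by (simp add: field_simps)
    also have "\<dots> \<le> Ii l * (2 * (R - 1))"
    proof (rule mult_left_mono)
      have "1 * 1 \<le> R * R" by (rule mult_mono) (use R1 in auto)
      moreover have "1 * R \<le> R * R" by (rule mult_right_mono) (use R1 in auto)
      ultimately have "R + 1 \<le> 2 * R^2" by (simp add: power2_eq_square)
      then have "(R - 1) * (R + 1) \<le> (R - 1) * (2 * R^2)" by (rule mult_left_mono) (use R1 in simp)
      then have "R^2 - 1 \<le> 2 * (R - 1) * R^2" by (simp add: power2_eq_square algebra_simps)
      then show "(R^2 - 1) / R^2 \<le> 2 * (R - 1)" using R1 by (simp add: divide_simps)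
    qed (use Ip in simp)
    also have "\<dots> \<le> Ii l1 * (2 * (R - 1))" by (rule mult_right_mono[OF I3]) (use R1 in simp)
    also have "\<dots> = 2 * Ii l1 / d * (l' - l)" unfolding R_def using d by (simp add: field_simps)
    finally show ?thesis using I2 ll by simp
  qed
  show ?thesis unfolding lipschitz_on_def
  proof (intro conjI ballI)
    show "0 \<le> 2 * Ii l1 / (l1 - 2 * M)" using Ii_pos[OF l1] d unfolding d_def by simp
    fix x y assume x: "x \<in> {l1..}" and y: "y \<in> {l1..}"
    show "dist (Ii x) (Ii y) \<le> 2 * Ii l1 / (l1 - 2 * M) * dist x y"
      using key[of x y] key[of y x] x y unfolding d_def dist_real_def
      by (cases "x \<le> y") (auto simp: abs_minus_commute)
  qed
qed

end


context setting begin

lemma Ii_near: "\<exists>l1. 2 * M < l1 \<and> 1 / g < Ii l1"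
proof -
  obtain ps where ps: "ps \<in> {p0..0}" "\<Gamma> ps = M" using M_attained by blast
  define B where "B = Bg"
  have B: "0 < B" unfolding B_def using Bg(1) .
  define \<epsilon> where "\<epsilon> = min (B * (- p0)) (g^2 / (64 * B^2))"
  have "0 < B * (- p0)" using B p00 by (intro mult_pos_pos) auto
  moreover have "0 < g^2 / (64 * B^2)" using B g by simp
  ultimately have e0: "0 < \<epsilon>" unfolding \<epsilon>_def by simp
  have e1: "\<epsilon> \<le> B * (- p0)" "\<epsilon> \<le> g^2 / (64 * B^2)" unfolding \<epsilon>_def by auto
  define l where "l = 2 * M + \<epsilon>"
  have l: "2 * M < l" unfolding l_def using e0 by simp
  define h where "h = \<epsilon> / (2 * B)"
  have h0: "0 < h" unfolding h_def using e0 B by simp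
  have h1: "h \<le> - p0"
  proof -
    have "h \<le> (B * (- p0)) / (2 * B)" unfolding h_def by (rule divide_right_mono[OF e1(1)]) (use B in simp)
    also have "\<dots> = (- p0) / 2" using B by simp
    finally show ?thesis using p00 by simp
  qed
  define u where "u = max p0 (ps - h)"
  define v where "v = min 0 (ps + h)"
  have uv: "h \<le> v - u" unfolding u_def v_def using ps(1) h0 h1 by (auto simp: min_def max_def)
  have J: "{u..v} \<subseteq> {p0..0}" unfolding u_def v_def by auto
  define s where "s = sqrt (2 * \<epsilon>)"
  have s0: "0 < s" unfolding s_def using e0 by simp
  have ss: "s^2 = 2 * \<epsilon>" unfolding s_def using e0 by simp
  have bnd: "1 / s ^ 3 \<le> 1 / aa \<gamma> l p ^ 3" if p: "p \<in> {u..v}" for p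
  proof -
    have pI: "p \<in> {p0..0}" using J p by auto
    have "\<bar>\<Gamma> ps - \<Gamma> p\<bar> \<le> Bg * \<bar>ps - p\<bar>" by (rule Gam_lip[OF pI ps(1)])
    moreover have "\<bar>ps - p\<bar> \<le> h" using p unfolding u_def v_def by auto
    ultimately have "M - \<Gamma> p \<le> B * h" using ps(2) B unfolding B_def
      by (smt (verit, best) mult_left_mono)
    then have Ale: "l - 2 * \<Gamma> p \<le> 2 * \<epsilon>" unfolding l_def h_def using B by (simp add: field_simps)
    have Age: "0 < l - 2 * \<Gamma> p" using A_low[OF pI, of l] l by simp
    have ap: "0 < aa \<gamma> l p" unfolding aa_def using Age by simp
    have "aa \<gamma> l p \<le> s" unfolding aa_def s_def using Ale by simp
    then have "aa \<gamma> l p ^ 3 \<le> s ^ 3" by (rule power_mono) (use ap in simp)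
    then show ?thesis by (rule divide_left_mono) (use ap s0 in auto)
  qed
  have "integral {u..v} (\<lambda>p. 1 / s ^ 3) \<le> integral {u..v} (\<lambda>p. 1 / aa \<gamma> l p ^ 3)"
    by (rule integral_le[OF integrable_continuous_interval[OF continuous_on_const]
          integrable_continuous_interval[OF continuous_on_subset[OF inv_cont[OF l] J]]])
       (use bnd in auto)
  also have "\<dots> \<le> Ii l" unfolding Ii_def
  proof (rule integral_subset_le[OF J])
    show "(\<lambda>p. 1 / aa \<gamma> l p ^ 3) integrable_on {u..v}"
      by (rule integrable_continuous_interval[OF continuous_on_subset[OF inv_cont[OF l] J]])
    show "(\<lambda>p. 1 / aa \<gamma> l p ^ 3) integrable_on {p0..0}" by (rule inv_int[OF l])
    show "\<forall>x\<in>{p0..0}. 0 \<le> 1 / aa \<gamma> l x ^ 3" using aa_pos[OF l] by (auto intro: less_imp_le)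
  qed
  finally have I1: "(v - u) / s ^ 3 \<le> Ii l" using uv h0 by simp
  have "h / s ^ 3 \<le> (v - u) / s ^ 3" by (rule divide_right_mono[OF uv]) (use s0 in simp)
  also have "h / s ^ 3 = 1 / (4 * B * s)"
  proof -
    have "s ^ 3 = s * (2 * \<epsilon>)" using ss by (simp add: power2_eq_square power3_eq_cube)
    then show ?thesis unfolding h_def using e0 s0 B by (simp add: field_simps)
  qed
  finally have I2: "1 / (4 * B * s) \<le> Ii l" using I1 by simp
  have "2 * \<epsilon> < (g / (4 * B))^2"
  proof -
    have "2 * \<epsilon> \<le> 2 * (g^2 / (64 * B^2))" using e1(2) by simp
    also have "\<dots> < g^2 / (16 * B^2)" using g B by (simp add: field_simps)
    also have "\<dots> = (g / (4 * B))^2" by (simp add: power2_eq_square)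
    finally show ?thesis .
  qed
  then have "s < g / (4 * B)" unfolding s_def using g B
    by (metis abs_of_pos divide_pos_pos mult_pos_pos real_sqrt_abs real_sqrt_less_mono zero_less_numeral)
  then have "4 * B * s < g" using B by (simp add: field_simps)
  then have "1 / g < 1 / (4 * B * s)" using B s0 g by (intro divide_strict_left_mono) auto
  then show ?thesis using I2 l by (intro exI[of _ l]) auto
qed

lemma Ii_far: "\<exists>l2. 2 * M < l2 \<and> (\<forall>l\<ge>l2. Ii l < 1 / g)"
proof (intro exI conjI allI impI)
  define D where "D = 1 + g * (- p0)"
  have "0 \<le> g * (- p0)" using g p00 by (intro mult_nonneg_nonneg) auto
  then have D: "1 \<le> D" unfolding D_def by simp
  show "2 * M < 2 * M + D" using D by simp
  fix l assume ll: "2 * M + D \<le> l"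
  have l: "2 * M < l" using ll D by simp
  have "Ii l \<le> integral {p0..0} (\<lambda>p. 1 / D)"
    unfolding Ii_def
  proof (rule integral_le[OF inv_int[OF l] integrable_continuous_interval[OF continuous_on_const]])
    fix p assume p: "p \<in> {p0..0}"
    define A where "A = l - 2 * \<Gamma> p"
    have AD: "D \<le> A" unfolding A_def using A_low[OF p, of l] ll by simp
    have s1: "1 \<le> sqrt A" using AD D by simp
    have "A = sqrt A ^ 2" using AD D by simp
    then have "A * 1 \<le> sqrt A ^ 2 * sqrt A" using s1 by (metis mult_left_mono zero_le_power2)
    then have "D \<le> sqrt A ^ 3" using AD by (simp add: power2_eq_square power3_eq_cube)
    moreover have "0 < sqrt A ^ 3" using s1 by simp
    ultimately show "1 / aa \<gamma> l p ^ 3 \<le> 1 / D" unfolding aa_def A_def[symmetric]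
      using D by (intro divide_left_mono) auto
  qed
  also have "\<dots> = (- p0) / D" using p00 by simp
  also have "\<dots> < 1 / g" using g D p00 unfolding D_def by (simp add: field_simps)
  finally show "Ii l < 1 / g" .
qed

lemma lam0_char: "2 * M < lam0 \<gamma> p0 g \<and> Ii (lam0 \<gamma> p0 g) = 1 / g"
proof -
  obtain l1 where l1: "2 * M < l1" "1 / g < Ii l1" using Ii_near by blast
  obtain l2 where l2: "2 * M < l2" "\<forall>l\<ge>l2. Ii l < 1 / g" using Ii_far by blast
  define l3 where "l3 = max l2 (l1 + 1)"
  have l3: "l1 \<le> l3" "Ii l3 < 1 / g" unfolding l3_def using l2 by auto
  have cont: "continuous_on {l1..l3} Ii"
    by (rule continuous_on_subset[OF lipschitz_on_continuous_on[OF Ii_lip[OF l1(1)]]]) auto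
  obtain l where l: "l1 \<le> l" "l \<le> l3" "Ii l = 1 / g"
    using IVT2'[of Ii l3 "1 / g" l1, OF _ _ l3(1) cont] l1 l3 by auto
  have lM: "2 * M < l" using l l1 by simp
  have "lam0 \<gamma> p0 g = l" unfolding lam0_def
  proof (rule the_equality)
    show "2 * Sup (\<Gamma> ` {p0..0}) < l \<and> 1 / g = integral {p0..0} (\<lambda>p. 1 / aa \<gamma> l p ^ 3)"
      using lM l(3) unfolding M_def Ii_def by simp
    fix l' assume a: "2 * Sup (\<Gamma> ` {p0..0}) < l' \<and> 1 / g = integral {p0..0} (\<lambda>p. 1 / aa \<gamma> l' p ^ 3)"
    then have l': "2 * M < l'" "Ii l' = 1 / g" unfolding M_def Ii_def by auto
    show "l' = l"
    proof (rule ccontr)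
      assume "l' \<noteq> l"
      then consider "l' < l" | "l < l'" by linarith
      then show False
      proof cases
        case 1 then show False using Ii_strict[OF l'(1) 1] l'(2) l(3) by simp
      next
        case 2 then show False using Ii_strict[OF lM 2] l'(2) l(3) by simp
      qed
    qed
  qed
  then show ?thesis using lM l(3) by simp
qed

end


lemma powr32: "0 < (l::real) \<Longrightarrow> l powr (3/2) = sqrt l ^ 3"
proof -
  assume l: "0 < l"
  have "sqrt l ^ 3 = (l powr (1/2)) ^ 3" using l by (simp add: powr_half_sqrt)
  also have "\<dots> = (l powr (1/2)) powr (real 3)" using l by (simp add: powr_realpow)
  also have "\<dots> = l powr (3/2)" by (simp add: powr_powr)
  finally show ?thesis by simp
qed

context setting begin

abbreviation "L0 \<equiv> lam0 \<gamma> p0 g"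

lemma L0: "2 * M < L0" using lam0_char by blast

definition bb where "bb l p = aa \<gamma> l p ^ 3"
definition cc where "cc l m p = m * aa \<gamma> l p"

lemma odeI_inst: "2 * M < l \<Longrightarrow> 0 \<le> m \<Longrightarrow> odeI p0 0 (bb l) (cc l m)"
  unfolding odeI_def bb_def[abs_def] cc_def[abs_def]
  using p00 aa_pos[of l] by (auto intro!: continuous_intros aa_cont) (smt (verit) atLeastAtMost_iff mult_nonneg_nonneg)

definition qf where
  "qf l m = (SOME q. \<exists>Z W. odeI.osol p0 0 (bb l) (cc l m) Z W \<and> q = W 0 / Z 0)"

lemma qf_eq:
  assumes l: "2 * M < l" and m: "0 \<le> m" and s: "odeI.osol p0 0 (bb l) (cc l m) Z W"
  shows "qf l m = W 0 / Z 0"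
proof -
  have o: "odeI p0 0 (bb l) (cc l m)" by (rule odeI_inst[OF l m])
  have "\<exists>q. \<exists>Z W. odeI.osol p0 0 (bb l) (cc l m) Z W \<and> q = W 0 / Z 0" using s by blast
  from someI_ex[OF this] obtain Z' W' where s': "odeI.osol p0 0 (bb l) (cc l m) Z' W'"
    and q: "qf l m = W' 0 / Z' 0" unfolding qf_def by blast
  have "1 * (W 0 / Z 0) \<le> W' 0 / Z' 0" by (rule qcompare[OF o o s s']) auto
  moreover have "1 * (W' 0 / Z' 0) \<le> W 0 / Z 0" by (rule qcompare[OF o o s' s]) auto
  ultimately show ?thesis using q by simp
qed

lemma qf_pos: "2 * M < l \<Longrightarrow> 0 \<le> m \<Longrightarrow> 0 < qf l m"
proof -
  assume l: "2 * M < l" and m: "0 \<le> m"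
  have o: "odeI p0 0 (bb l) (cc l m)" by (rule odeI_inst[OF l m])
  obtain Z W where s: "odeI.osol p0 0 (bb l) (cc l m) Z W" using odeI.osol_exists[OF o] by blast
  show ?thesis using qf_eq[OF l m s] odeI.q_pos[OF o s] by simp
qed

lemma Xi_eq:
  assumes l: "2 * M < l" and m: "0 \<le> m"
  shows "\<exists>z0>0. Xi \<gamma> p0 g \<sigma> l m = z0 * (qf l m - g - \<sigma> * m)"
proof -
  have o: "odeI p0 0 (bb l) (cc l m)" by (rule odeI_inst[OF l m])
  obtain Z W where s: "odeI.osol p0 0 (bb l) (cc l m) Z W" using odeI.osol_exists[OF o] by blast
  have Wc: "continuous_on {p0..0} W" and Wg: "\<forall>p\<in>{p0..0}. bb l p0 \<le> W p" and W0: "W p0 = bb l p0"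
    and Z0: "Z p0 = 0"
    and Zd: "\<forall>p\<in>{p0..0}. (Z has_real_derivative W p / bb l p) (at p within {p0..0})"
    and Wd: "\<forall>p\<in>{p0..0}. (W has_real_derivative cc l m p * Z p) (at p within {p0..0})"
    using s unfolding odeI.osol_def[OF o] by auto
  have bbp: "0 < bb l p" if "p \<in> {p0..0}" for p unfolding bb_def using aa_pos[OF l that] by simp
  have i0: "0 \<in> {p0..0}" using p00 by simp
  have Zp: "0 < Z 0" using odeI.Z_pos[OF o s i0 p00] .
  have lpos: "0 < l" using l M_nonneg by simp
  have bb0: "bb l 0 = l powr (3/2)" unfolding bb_def aa_def using Gam0 powr32[OF lpos] by simp
  have zs: "is_zsol \<gamma> p0 l m Z (\<lambda>p. W p / bb l p)"
    unfolding is_zsol_def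
  proof (intro conjI ballI)
    show "(Z has_real_derivative W p / bb l p) (at p within {p0..0})" if "p \<in> {p0..0}" for p
      using Zd that by blast
    show "continuous_on {p0..0} (\<lambda>p. W p / bb l p)"
      unfolding bb_def[abs_def] by (intro continuous_intros Wc aa_cont) (use aa_pos[OF l] in force)
    show "Z p0 = 0" by (rule Z0)
    show "W p0 / bb l p0 = 1" using W0 bbp[of p0] p00 by simp
    fix p assume p: "p \<in> {p0<..<0}"
    have pI: "p \<in> {p0..0}" using p by auto
    have eq: "at p within {p0..0} = at p" using at_within_Icc_at[of p0 p 0] p by auto
    have "(W has_real_derivative cc l m p * Z p) (at p within {p0..0})" using Wd pI by blast
    then have "(W has_real_derivative m * aa \<gamma> l p * Z p) (at p)" using eq by (simp add: cc_def)
    then show "((\<lambda>q. aa \<gamma> l q ^ 3 * (W q / bb l q)) has_real_derivative m * aa \<gamma> l p * Z p) (at p)"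
    proof (rule has_field_derivative_transform_within_open[where S="{p0<..<0}"])
      show "open {p0<..<0::real}" by simp
      show "p \<in> {p0<..<0}" by (rule p)
      fix x assume x: "x \<in> {p0<..<0}"
      then have "0 < bb l x" using bbp[of x] by auto
      then show "W x = aa \<gamma> l x ^ 3 * (W x / bb l x)" unfolding bb_def by simp
    qed
  qed
  have "Xi \<gamma> p0 g \<sigma> l m = l powr (3/2) * (W 0 / bb l 0) - (g + \<sigma> * m) * Z 0"
    unfolding Xi_def
  proof (rule the_equality)
    show "\<exists>z z'. is_zsol \<gamma> p0 l m z z' \<and>
        l powr (3/2) * (W 0 / bb l 0) - (g + \<sigma> * m) * Z 0 = l powr (3/2) * z' 0 - (g + \<sigma> * m) * z 0"
      using zs by blast
    fix v assume "\<exists>z z'. is_zsol \<gamma> p0 l m z z' \<and> v = l powr (3/2) * z' 0 - (g + \<sigma> * m) * z 0"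
    then obtain z z' where zz: "is_zsol \<gamma> p0 l m z z'" and v: "v = l powr (3/2) * z' 0 - (g + \<sigma> * m) * z 0"
      by blast
    have zd: "\<forall>p\<in>{p0..0}. (z has_real_derivative z' p) (at p within {p0..0})"
      and z'c: "continuous_on {p0..0} z'"
      and bzd: "\<forall>p\<in>{p0<..<0}. ((\<lambda>q. bb l q * z' q) has_real_derivative cc l m p * z p) (at p)"
      and z0: "z p0 = 0" and z'0: "z' p0 = 1"
      using zz unfolding is_zsol_def bb_def cc_def by auto
    have "z 0 = Z 0 \<and> z' 0 = W 0 / bb l 0" by (rule odeI.uniq[OF o s zd z'c bzd z0 z'0 i0])
    then show "v = l powr (3/2) * (W 0 / bb l 0) - (g + \<sigma> * m) * Z 0" using v by simp
  qed
  also have "\<dots> = Z 0 * (W 0 / Z 0 - g - \<sigma> * m)"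
    using bb0 Zp lpos by (simp add: field_simps)
  also have "\<dots> = Z 0 * (qf l m - g - \<sigma> * m)" using qf_eq[OF l m s] by simp
  finally show ?thesis using Zp by blast
qed

lemma Xi_sign:
  assumes "2 * M < l" "0 \<le> m"
  shows "(Xi \<gamma> p0 g \<sigma> l m < 0 \<longleftrightarrow> qf l m - g - \<sigma> * m < 0) \<and>
         (Xi \<gamma> p0 g \<sigma> l m = 0 \<longleftrightarrow> qf l m - g - \<sigma> * m = 0) \<and>
         (Xi \<gamma> p0 g \<sigma> l m > 0 \<longleftrightarrow> qf l m - g - \<sigma> * m > 0)"
proof -
  obtain z0 where z: "z0 > 0" "Xi \<gamma> p0 g \<sigma> l m = z0 * (qf l m - g - \<sigma> * m)" using Xi_eq[OF assms] by blast
  show ?thesis unfolding z(2) using z(1) by (simp add: mult_less_0_iff zero_less_mult_iff)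
qed

end


context setting begin

lemma sol_of: "2 * M < l \<Longrightarrow> 0 \<le> m \<Longrightarrow> \<exists>Z W. odeI.osol p0 0 (bb l) (cc l m) Z W \<and> qf l m = W 0 / Z 0"
proof -
  assume l: "2 * M < l" and m: "0 \<le> m"
  obtain Z W where s: "odeI.osol p0 0 (bb l) (cc l m) Z W" using odeI.osol_exists[OF odeI_inst[OF l m]] by blast
  then show ?thesis using qf_eq[OF l m s] by blast
qed

lemma qf_strict:
  assumes l: "2 * M < l" and ll: "l < l'" and m: "0 \<le> m"
  shows "qf l m < qf l' m"
proof -
  have l': "2 * M < l'" using l ll by simp
  obtain Z W where s: "odeI.osol p0 0 (bb l) (cc l m) Z W" and q: "qf l m = W 0 / Z 0" using sol_of[OF l m] by blast
  obtain Z' W' where s': "odeI.osol p0 0 (bb l') (cc l' m) Z' W'" and q': "qf l' m = W' 0 / Z' 0" using sol_of[OF l' m] by blast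
  define Am where "Am = l + 2 * (Bg * (- p0))"
  have Am: "0 < Am" unfolding Am_def using Am_pos[OF l] .
  define \<rho> where "\<rho> = 1 + (l' - l) / Am"
  have \<rho>: "1 < \<rho>" unfolding \<rho>_def using Am ll by simp
  have sr: "1 < sqrt \<rho>" using \<rho> by simp
  have "sqrt \<rho> * (W 0 / Z 0) \<le> W' 0 / Z' 0"
  proof (rule qcompare[OF odeI_inst[OF l m] odeI_inst[OF l' m] s s'])
    show "0 \<le> sqrt \<rho>" using sr by simp
    fix p assume p: "p \<in> {p0..0}"
    define A where "A = l - 2 * \<Gamma> p"
    have A: "0 < A" unfolding A_def using A_low[OF p, of l] l by simp
    have AAm: "A \<le> Am" unfolding A_def Am_def using A_up[OF p] by simp
    have "\<rho> * A = A + (l' - l) * (A / Am)" unfolding \<rho>_def using Am by (simp add: field_simps)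
    also have "\<dots> \<le> A + (l' - l) * 1"
      by (rule add_left_mono, rule mult_left_mono) (use AAm Am ll A in auto)
    finally have rA: "\<rho> * A \<le> l' - 2 * \<Gamma> p" unfolding A_def by simp
    have c: "sqrt \<rho> * sqrt A ^ 3 \<le> sqrt (l' - 2 * \<Gamma> p) ^ 3 \<and> sqrt \<rho> * sqrt A \<le> sqrt (l' - 2 * \<Gamma> p)"
      using cube_low[OF A rA] \<rho> by simp
    have "sqrt \<rho> * (m * sqrt A) \<le> m * sqrt (l' - 2 * \<Gamma> p)"
      using mult_left_mono[OF conjunct2[OF c] m] by (simp add: algebra_simps)
    then show "sqrt \<rho> * bb l p \<le> bb l' p \<and> sqrt \<rho> * cc l m p \<le> cc l' m p"
      using c unfolding bb_def cc_def aa_def A_def by simp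
  qed
  moreover have "0 < W 0 / Z 0" using qf_pos[OF l m] q by simp
  ultimately have "1 * (W 0 / Z 0) < W' 0 / Z' 0"
    using mult_strict_right_mono[OF sr, of "W 0 / Z 0"] by linarith
  then show ?thesis using q q' by simp
qed

lemma qf_R:
  assumes l1: "2 * M < l1" and ll: "l1 \<le> l" "l \<le> l'" and m: "0 \<le> m"
  shows "qf l' m \<le> (1 + (l' - l) / (l1 - 2 * M))^2 * qf l m"
proof -
  define R where "R = 1 + (l' - l) / (l1 - 2 * M)"
  have l: "2 * M < l" and l': "2 * M < l'" using l1 ll by auto
  have R1: "1 \<le> R" unfolding R_def using l1 ll by simp
  obtain Z W where s: "odeI.osol p0 0 (bb l) (cc l m) Z W" and q: "qf l m = W 0 / Z 0" using sol_of[OF l m] by blast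
  obtain Z' W' where s': "odeI.osol p0 0 (bb l') (cc l' m) Z' W'" and q': "qf l' m = W' 0 / Z' 0" using sol_of[OF l' m] by blast
  have "(1 / R^2) * (W' 0 / Z' 0) \<le> W 0 / Z 0"
  proof (rule qcompare[OF odeI_inst[OF l' m] odeI_inst[OF l m] s' s])
    show "0 \<le> 1 / R^2" by simp
    fix p assume p: "p \<in> {p0..0}"
    define A where "A = l - 2 * \<Gamma> p"
    have A: "0 < A" unfolding A_def using A_low[OF p, of l] l by simp
    have Ad: "l1 - 2 * M \<le> A" unfolding A_def using A_low[OF p, of l] ll by simp
    have "l' - 2 * \<Gamma> p = A + (l' - l)" unfolding A_def by simp
    also have "\<dots> \<le> A + (l' - l) * (A / (l1 - 2 * M))"
    proof -
      have "1 \<le> A / (l1 - 2 * M)" using Ad l1 by simp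
      then have "(l' - l) * 1 \<le> (l' - l) * (A / (l1 - 2 * M))" by (rule mult_left_mono) (use ll in simp)
      then show ?thesis by simp
    qed
    also have "\<dots> = R * A" unfolding R_def using l1 by (simp add: field_simps)
    finally have AR: "l' - 2 * \<Gamma> p \<le> R * A" .
    have AA: "A \<le> l' - 2 * \<Gamma> p" unfolding A_def using ll by simp
    have c: "sqrt (l' - 2 * \<Gamma> p) ^ 3 \<le> R^2 * sqrt A ^ 3 \<and> sqrt (l' - 2 * \<Gamma> p) \<le> R * sqrt A"
      using cube_cmp[OF A AA AR R1] by simp
    have R2: "R \<le> R^2" using R1 by (simp add: power2_eq_square)
    have sA: "0 \<le> sqrt A" using A by simp
    have "sqrt (l' - 2 * \<Gamma> p) \<le> R^2 * sqrt A"
      using conjunct2[OF c] mult_right_mono[OF R2 sA] by linarith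
    then have "m * sqrt (l' - 2 * \<Gamma> p) \<le> m * (R^2 * sqrt A)" by (rule mult_left_mono[OF _ m])
    then have "m * sqrt (l' - 2 * \<Gamma> p) \<le> R^2 * (m * sqrt A)" by (simp add: algebra_simps)
    then have cc': "(1 / R^2) * (m * sqrt (l' - 2 * \<Gamma> p)) \<le> m * sqrt A"
      using R1 by (simp add: field_simps)
    have bb': "(1 / R^2) * sqrt (l' - 2 * \<Gamma> p) ^ 3 \<le> sqrt A ^ 3"
      using conjunct1[OF c] R1 by (simp add: field_simps)
    show "1 / R^2 * bb l' p \<le> bb l p \<and> 1 / R^2 * cc l' m p \<le> cc l m p"
      using bb' cc' unfolding bb_def cc_def aa_def A_def by simp
  qed
  then have "R^2 * ((1 / R^2) * (W' 0 / Z' 0)) \<le> R^2 * (W 0 / Z 0)" by (rule mult_left_mono) simp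
  then have "W' 0 / Z' 0 \<le> R^2 * (W 0 / Z 0)" using R1 by simp
  then show ?thesis using q q' unfolding R_def by simp
qed

lemma qf_concave:
  assumes l: "2 * M < l" and m: "0 \<le> m1" "0 \<le> m2" and t: "0 \<le> t" "t \<le> 1"
  shows "t * qf l m1 + (1 - t) * qf l m2 \<le> qf l (t * m1 + (1 - t) * m2)"
proof -
  have m3: "0 \<le> t * m1 + (1 - t) * m2" using m t by simp
  obtain Z1 W1 where s1: "odeI.osol p0 0 (bb l) (cc l m1) Z1 W1" and q1: "qf l m1 = W1 0 / Z1 0" using sol_of[OF l m(1)] by blast
  obtain Z2 W2 where s2: "odeI.osol p0 0 (bb l) (cc l m2) Z2 W2" and q2: "qf l m2 = W2 0 / Z2 0" using sol_of[OF l m(2)] by blast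
  obtain Z W where s: "odeI.osol p0 0 (bb l) (cc l (t * m1 + (1 - t) * m2)) Z W"
    and q: "qf l (t * m1 + (1 - t) * m2) = W 0 / Z 0" using sol_of[OF l m3] by blast
  have "t * (W1 0 / Z1 0) + (1 - t) * (W2 0 / Z2 0) \<le> W 0 / Z 0"
    by (rule qconcave[OF odeI_inst[OF l m(1)] odeI_inst[OF l m(2)] odeI_inst[OF l m3] s1 s2 s _ t])
       (simp add: cc_def algebra_simps)
  then show ?thesis using q q1 q2 by simp
qed

lemma qf_lower:
  assumes l: "2 * M < l" and m: "0 \<le> m"
  shows "(l - 2 * M) * sqrt (l - 2 * M) / (- p0) \<le> qf l m"
proof -
  obtain Z W where s: "odeI.osol p0 0 (bb l) (cc l m) Z W" and q: "qf l m = W 0 / Z 0" using sol_of[OF l m] by blast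
  have "(l - 2 * M) * sqrt (l - 2 * M) / (0 - p0) \<le> W 0 / Z 0"
  proof (rule qlower[OF odeI_inst[OF l m] s])
    show "0 \<le> (l - 2 * M) * sqrt (l - 2 * M)" using l by simp
    fix p assume p: "p \<in> {p0..0}"
    have r: "sqrt (l - 2 * M) \<le> aa \<gamma> l p" unfolding aa_def using A_low[OF p, of l] by simp
    have r0: "0 \<le> sqrt (l - 2 * M)" using l by simp
    have "(l - 2 * M) * sqrt (l - 2 * M) = sqrt (l - 2 * M) ^ 3"
      using l by (simp add: power3_eq_cube)
    also have "\<dots> \<le> aa \<gamma> l p ^ 3" by (rule power_mono[OF r r0])
    finally show "(l - 2 * M) * sqrt (l - 2 * M) \<le> bb l p" unfolding bb_def .
  qed
  then show ?thesis using q by simp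
qed

end


lemma R2_bound:
  fixes d \<delta> :: real
  assumes "0 < d" "0 \<le> \<delta>" "\<delta> \<le> d"
  shows "(1 + \<delta> / d)^2 \<le> 1 + 3 * (\<delta> / d)"
proof -
  define t where "t = \<delta> / d"
  have t: "0 \<le> t" "t \<le> 1" unfolding t_def using assms by auto
  have "t * t \<le> t * 1" by (rule mult_left_mono) (use t in auto)
  then show ?thesis unfolding t_def[symmetric] by (simp add: power2_eq_square algebra_simps)
qed

lemma pick_delta:
  fixes d \<kappa> :: real
  assumes d: "0 < d" and k: "1 < \<kappa>"
  shows "\<exists>\<delta>>0. \<forall>\<delta>'. 0 \<le> \<delta>' \<longrightarrow> \<delta>' \<le> \<delta> \<longrightarrow> (1 + \<delta>' / d)^2 < \<kappa>"
proof (intro exI conjI allI impI)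
  define \<delta> where "\<delta> = d * min 1 ((\<kappa> - 1) / 4)"
  show "0 < \<delta>" unfolding \<delta>_def using d k by simp
  fix \<delta>' assume a: "0 \<le> \<delta>'" "\<delta>' \<le> \<delta>"
  have dd: "\<delta> \<le> d" unfolding \<delta>_def using d by (simp add: min_def)
  have "(1 + \<delta>' / d)^2 \<le> 1 + 3 * (\<delta>' / d)" by (rule R2_bound) (use d a dd in auto)
  also have "\<delta>' / d \<le> \<delta> / d" by (rule divide_right_mono[OF a(2)]) (use d in simp)
  then have "1 + 3 * (\<delta>' / d) \<le> 1 + 3 * (\<delta> / d)" by simp
  also have "\<delta> / d = min 1 ((\<kappa> - 1) / 4)" unfolding \<delta>_def using d by simp
  then have "\<delta> / d \<le> (\<kappa> - 1) / 4" by (metis min.cobounded2)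
  then have "1 + 3 * (\<delta> / d) < \<kappa>" using k by simp
  finally show "(1 + \<delta>' / d)^2 < \<kappa>" .
qed

locale setting_H = setting +
  assumes Hyp: "\<forall>l \<ge> lam0 (gam p1 \<gamma>1 \<gamma>2) p0 g. \<exists>m \<ge> 0.
           Xi (gam p1 \<gamma>1 \<gamma>2) p0 g \<sigma> l m = 0 \<and>
           (\<forall>m'>m. Xi (gam p1 \<gamma>1 \<gamma>2) p0 g \<sigma> l m' < 0)"
begin

abbreviation "mu \<equiv> muf \<gamma> p0 g \<sigma>"
definition G where "G l m = qf l m - g - \<sigma> * m"

lemma lM: "L0 \<le> l \<Longrightarrow> 2 * M < l" using L0 by simp

lemma mu_char: "L0 \<le> l \<Longrightarrow> 0 \<le> mu l \<and> G l (mu l) = 0 \<and> (\<forall>m'>mu l. G l m' < 0)"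
proof -
  assume l: "L0 \<le> l"
  obtain m where m: "0 \<le> m" "Xi \<gamma> p0 g \<sigma> l m = 0" "\<forall>m'>m. Xi \<gamma> p0 g \<sigma> l m' < 0"
    using Hyp l by blast
  have "mu l = m" unfolding muf_def
  proof (rule the_equality)
    show "0 \<le> m \<and> Xi \<gamma> p0 g \<sigma> l m = 0 \<and> (\<forall>m'>m. Xi \<gamma> p0 g \<sigma> l m' < 0)" using m by blast
    fix m2 assume m2: "0 \<le> m2 \<and> Xi \<gamma> p0 g \<sigma> l m2 = 0 \<and> (\<forall>m'>m2. Xi \<gamma> p0 g \<sigma> l m' < 0)"
    show "m2 = m"
    proof (rule ccontr)
      assume "m2 \<noteq> m"
      then consider "m2 < m" | "m < m2" by linarith
      then show False
      proof cases
        case 1 then show False using m2 m(2) by fastforce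
      next
        case 2 then show False using m(3) m2 by fastforce
      qed
    qed
  qed
  moreover have "G l m = 0" using Xi_sign[OF lM[OF l] m(1)] m(2) unfolding G_def by simp
  moreover have "G l m' < 0" if "m' > m" for m'
    using Xi_sign[OF lM[OF l], of m'] m(3) that m(1) unfolding G_def by simp
  ultimately show ?thesis using m(1) by simp
qed

lemma G_pos_le: "L0 \<le> l \<Longrightarrow> 0 \<le> m \<Longrightarrow> 0 < G l m \<Longrightarrow> m \<le> mu l"
  using mu_char by (meson leI order.asym)

lemma G_strict: "L0 \<le> l \<Longrightarrow> l < l' \<Longrightarrow> 0 \<le> m \<Longrightarrow> G l m < G l' m"
  unfolding G_def using qf_strict[OF lM] by simp

lemma G_concave:
  assumes "L0 \<le> l" "0 \<le> m1" "0 \<le> m2" "0 \<le> t" "t \<le> 1"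
  shows "t * G l m1 + (1 - t) * G l m2 \<le> G l (t * m1 + (1 - t) * m2)"
  using qf_concave[OF lM[OF assms(1)] assms(2-5)] unfolding G_def by (simp add: algebra_simps)

lemma G_between:
  assumes l: "L0 \<le> l" and a: "0 \<le> x" "x < m" "m < z" and gx: "0 \<le> G l x" and gz: "0 \<le> G l z"
  shows "0 \<le> G l m"
proof -
  define t where "t = (z - m) / (z - x)"
  have t: "0 \<le> t" "t \<le> 1" unfolding t_def using a by auto
  have h: "t * (z - x) = z - m" unfolding t_def using a by simp
  have "(1 - t) * z = z - t * z" by (simp add: left_diff_distrib)
  moreover have "t * (z - x) = t * z - t * x" by (simp add: right_diff_distrib)
  ultimately have mt: "m = t * x + (1 - t) * z" using h by linarith
  have "0 \<le> t * G l x + (1 - t) * G l z" using t gx gz by simp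
  also have "\<dots> \<le> G l m" unfolding mt by (rule G_concave[OF l a(1) _ t]) (use a in simp)
  finally show ?thesis .
qed

lemma G_between_strict:
  assumes l: "L0 \<le> l" and a: "0 \<le> x" "x < m" "m < z" and gx: "0 < G l x" and gz: "0 \<le> G l z"
  shows "0 < G l m"
proof -
  define t where "t = (z - m) / (z - x)"
  have t: "0 < t" "t \<le> 1" unfolding t_def using a by auto
  have h: "t * (z - x) = z - m" unfolding t_def using a by simp
  have "(1 - t) * z = z - t * z" by (simp add: left_diff_distrib)
  moreover have "t * (z - x) = t * z - t * x" by (simp add: right_diff_distrib)
  ultimately have mt: "m = t * x + (1 - t) * z" using h by linarith
  have "0 < t * G l x + (1 - t) * G l z" using t gx gz by (simp add: add_pos_nonneg)
  also have "\<dots> \<le> G l m" unfolding mt by (rule G_concave[OF l a(1) _ _ t(2)]) (use a t in auto)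
  finally show ?thesis .
qed

lemma mu_strict: "L0 \<le> l \<Longrightarrow> l < l' \<Longrightarrow> mu l < mu l'"
proof -
  assume l: "L0 \<le> l" and ll: "l < l'"
  have l': "L0 \<le> l'" using l ll by simp
  have c: "0 \<le> mu l" "G l (mu l) = 0" using mu_char[OF l] by auto
  have c': "G l' (mu l') = 0" using mu_char[OF l'] by auto
  have "0 < G l' (mu l)" using G_strict[OF l ll c(1)] c(2) by simp
  then have le: "mu l \<le> mu l'" by (rule G_pos_le[OF l' c(1)])
  moreover have "mu l \<noteq> mu l'" using \<open>0 < G l' (mu l)\<close> c' by auto
  ultimately show ?thesis by simp
qed

lemma mu_mono: "L0 \<le> l \<Longrightarrow> l \<le> l' \<Longrightarrow> mu l \<le> mu l'"
  using mu_strict by (cases "l = l'") (auto intro: less_imp_le)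

lemma big_lambda:
  assumes C: "0 < C"
  shows "\<exists>N. \<forall>l\<ge>N. C * l \<le> mu l"
proof -
  define Lp where "Lp = - p0"
  have Lp: "0 < Lp" unfolding Lp_def using p00 by simp
  define T where "T = 2 * Lp * (\<sigma> * C + 1)"
  have T: "0 \<le> T" unfolding T_def using Lp \<sigma> C by simp
  define N where "N = max L0 (max (4 * M) (max (g + 1) (max 1 (2 * T^2))))"
  show ?thesis
  proof (intro exI allI impI)
    fix l assume lN: "N \<le> l"
    have l: "L0 \<le> l" "4 * M \<le> l" "g + 1 \<le> l" "1 \<le> l" "2 * T^2 \<le> l" using lN unfolding N_def by auto
    define u where "u = l - 2 * M"
    have u: "l / 2 \<le> u" unfolding u_def using l(2) by simp
    have lp: "0 < l" using l(4) by simp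
    have "T^2 \<le> l / 2" using l(5) by simp
    also have "\<dots> \<le> u" by (rule u)
    finally have "sqrt (T^2) \<le> sqrt u" by (rule real_sqrt_le_mono)
    then have su: "T \<le> sqrt u" using T by simp
    have "l / 2 * T \<le> u * sqrt u" by (rule mult_mono[OF u su]) (use lp T u in auto)
    then have "l * Lp * (\<sigma> * C + 1) \<le> u * sqrt u" unfolding T_def by (simp add: algebra_simps)
    then have "l * (\<sigma> * C + 1) \<le> u * sqrt u / Lp" using Lp by (simp add: field_simps)
    moreover have "u * sqrt u / Lp \<le> qf l (C * l)"
      using qf_lower[OF lM[OF l(1)], of "C * l"] C lp unfolding u_def Lp_def by simp
    ultimately have "l * (\<sigma> * C + 1) \<le> qf l (C * l)" by linarith
    then have "0 < G l (C * l)" unfolding G_def using l(3) g by (simp add: algebra_simps)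
    then show "C * l \<le> mu l" using G_pos_le[OF l(1)] C lp by simp
  qed
qed

lemma limit: "filterlim (\<lambda>l. mu l / l) at_top at_top"
  unfolding filterlim_at_top
proof
  fix Zc :: real
  define C where "C = max Zc 1"
  have C: "0 < C" "Zc \<le> C" unfolding C_def by auto
  obtain N where N: "\<forall>l\<ge>N. C * l \<le> mu l" using big_lambda[OF C(1)] by blast
  show "\<forall>\<^sub>F l in at_top. Zc \<le> mu l / l"
    unfolding eventually_at_top_linorder
  proof (intro exI allI impI)
    fix l assume l: "max N 1 \<le> l"
    then have lp: "0 < l" by simp
    have "C * l \<le> mu l" using N l by simp
    then have "C \<le> mu l / l" using lp by (simp add: field_simps)
    then show "Zc \<le> mu l / l" using C by simp
  qed
qed

lemma surj:
  assumes y: "mu L0 \<le> y"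
  shows "\<exists>l\<ge>L0. mu l = y"
proof -
  define d where "d = L0 - 2 * M"
  have d: "0 < d" unfolding d_def using L0 by simp
  define S where "S = {l. L0 \<le> l \<and> mu l \<le> y}"
  have L0S: "L0 \<in> S" unfolding S_def using y by simp
  obtain N where N: "\<forall>l\<ge>N. 1 * l \<le> mu l" using big_lambda[of 1] by auto
  have bdd: "bdd_above S"
  proof (rule bdd_aboveI[of _ "max N (y + 1)"])
    fix l assume "l \<in> S"
    then have l: "L0 \<le> l" "mu l \<le> y" unfolding S_def by auto
    show "l \<le> max N (y + 1)"
    proof (rule ccontr)
      assume "\<not> l \<le> max N (y + 1)"
      then have "N \<le> l" "y + 1 < l" by auto
      then show False using N l(2) by force
    qed
  qed
  define Ls where "Ls = Sup S"
  have Ls0: "L0 \<le> Ls" unfolding Ls_def by (rule cSup_upper[OF L0S bdd])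
  have above: "y < mu l" if "Ls < l" for l
  proof -
    have "l \<notin> S" using that cSup_upper[OF _ bdd, of l] unfolding Ls_def by force
    then show ?thesis unfolding S_def using that Ls0 by auto
  qed
  have below: "mu l \<le> y" if w1: "L0 \<le> l" and w2: "l < Ls" for l
  proof -
    obtain s where s: "s \<in> S" "l < s" using w2 less_cSup_iff[of S l] L0S bdd unfolding Ls_def by blast
    then have "mu l \<le> mu s" using mu_mono[OF w1] by simp
    then show ?thesis using s unfolding S_def by simp
  qed
  have cLs: "0 \<le> mu Ls" "G Ls (mu Ls) = 0" "\<forall>m'>mu Ls. G Ls m' < 0" using mu_char[OF Ls0] by auto
  consider "mu Ls < y" | "mu Ls = y" | "y < mu Ls" by linarith
  then show ?thesis
  proof cases
    case 2 then show ?thesis using Ls0 by blast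
  next
    case 1
    define m where "m = (mu Ls + y) / 2"
    have m: "mu Ls < m" "m < y" using 1 unfolding m_def by auto
    have m0: "0 \<le> m" using m cLs by simp
    have Gm: "G Ls m < 0" using cLs m by simp
    have qp: "0 < qf Ls m" by (rule qf_pos[OF lM[OF Ls0] m0])
    define \<kappa> where "\<kappa> = (g + \<sigma> * m) / qf Ls m"
    have \<kappa>: "1 < \<kappa>" unfolding \<kappa>_def using Gm qp unfolding G_def by (simp add: field_simps)
    obtain \<delta> where \<delta>: "0 < \<delta>" "\<forall>\<delta>'. 0 \<le> \<delta>' \<longrightarrow> \<delta>' \<le> \<delta> \<longrightarrow> (1 + \<delta>' / d)^2 < \<kappa>"
      using pick_delta[OF d \<kappa>] by blast
    define l where "l = Ls + \<delta>"
    have l: "L0 \<le> l" "Ls < l" unfolding l_def using Ls0 \<delta> by auto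
    have "qf l m \<le> (1 + (l - Ls) / d)^2 * qf Ls m"
      using qf_R[OF L0 Ls0 less_imp_le[OF l(2)] m0] unfolding d_def .
    also have "\<dots> < \<kappa> * qf Ls m"
      by (rule mult_strict_right_mono) (use \<delta> qp in \<open>auto simp: l_def\<close>)
    also have "\<dots> = g + \<sigma> * m" unfolding \<kappa>_def using qp by simp
    finally have "G l m < 0" unfolding G_def by simp
    moreover have "0 \<le> G l m"
    proof (rule G_between[OF l(1) cLs(1) m(1)])
      show "m < mu l" using above[OF l(2)] m by simp
      show "0 \<le> G l (mu Ls)" using G_strict[OF Ls0 l(2) cLs(1)] cLs(2) by simp
      show "0 \<le> G l (mu l)" using mu_char[OF l(1)] by simp
    qed
    ultimately show ?thesis by simp
  next
    case 3
    have LsL0: "L0 < Ls"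
    proof (rule ccontr)
      assume "\<not> L0 < Ls"
      then have "Ls = L0" using Ls0 by simp
      then show False using 3 y by simp
    qed
    have "\<exists>m. y < m \<and> m < mu Ls \<and> 0 < G Ls m"
    proof (rule ccontr)
      assume na: "\<not> (\<exists>m. y < m \<and> m < mu Ls \<and> 0 < G Ls m)"
      have allneg: "G Ls x \<le> 0" if x: "0 \<le> x" for x
      proof (rule ccontr)
        assume gx: "\<not> G Ls x \<le> 0"
        consider "mu Ls < x" | "x = mu Ls" | "y < x \<and> x < mu Ls" | "x \<le> y" by linarith
        then show False
        proof cases
          case 1 then show False using cLs gx by force
        next
          case 2 then show False using cLs gx by simp
        next
          case 3 then show False using na gx by auto
        next
          case 4
          define m where "m = (y + mu Ls) / 2"
          have m: "x < m" "m < mu Ls" "y < m" using 3 4 unfolding m_def by auto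
          have "0 < G Ls m" by (rule G_between_strict[OF Ls0 x m(1) m(2)]) (use gx cLs in auto)
          then show False using na m by auto
        qed
      qed
      have c0: "0 \<le> mu L0" "G L0 (mu L0) = 0" using mu_char[of L0] by auto
      have "G L0 (mu L0) < G Ls (mu L0)" by (rule G_strict[OF _ LsL0 c0(1)]) simp
      then show False using allneg[OF c0(1)] c0(2) by simp
    qed
    then obtain m where m: "y < m" "m < mu Ls" "0 < G Ls m" by blast
    have "0 \<le> mu L0" using mu_char[of L0] by simp
    then have m0: "0 \<le> m" using m(1) y by linarith
    have gs: "0 < g + \<sigma> * m" using g \<sigma> m0 by (simp add: add_pos_nonneg)
    define \<kappa> where "\<kappa> = qf Ls m / (g + \<sigma> * m)"
    have \<kappa>: "1 < \<kappa>" unfolding \<kappa>_def using m(3) gs unfolding G_def by (simp add: field_simps)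
    obtain \<delta> where \<delta>: "0 < \<delta>" "\<forall>\<delta>'. 0 \<le> \<delta>' \<longrightarrow> \<delta>' \<le> \<delta> \<longrightarrow> (1 + \<delta>' / d)^2 < \<kappa>"
      using pick_delta[OF d \<kappa>] by blast
    define \<delta>' where "\<delta>' = min \<delta> ((Ls - L0) / 2)"
    have "0 < (Ls - L0) / 2" using LsL0 by simp
    then have \<delta>': "0 < \<delta>'" "\<delta>' \<le> \<delta>" "\<delta>' \<le> (Ls - L0) / 2" unfolding \<delta>'_def using \<delta> by (auto simp: min_def)
    define l where "l = Ls - \<delta>'"
    have l: "L0 \<le> l" "l < Ls" unfolding l_def using \<delta>' by auto
    have ql: "0 < qf l m" by (rule qf_pos[OF lM[OF l(1)] m0])
    have "qf Ls m \<le> (1 + (Ls - l) / d)^2 * qf l m"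
      using qf_R[OF L0 l(1) less_imp_le[OF l(2)] m0] unfolding d_def .
    also have "\<dots> < \<kappa> * qf l m"
      by (rule mult_strict_right_mono) (use \<delta> \<delta>' ql in \<open>auto simp: l_def\<close>)
    finally have "qf Ls m / \<kappa> < qf l m" using \<kappa> by (simp add: field_simps)
    moreover have "qf Ls m / \<kappa> = g + \<sigma> * m" unfolding \<kappa>_def using gs m(3) unfolding G_def
      by (simp add: field_simps)
    ultimately have "0 < G l m" unfolding G_def by simp
    moreover have "G l m < 0" using mu_char[OF l(1)] below[OF l] m(1) by simp
    ultimately show ?thesis by simp
  qed
qed

lemma main:
  "filterlim (\<lambda>l. mu l / l) at_top at_top \<and> bij_betw mu {L0..} {mu L0..}"
proof
  show "filterlim (\<lambda>l. mu l / l) at_top at_top" by (rule limit)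
  show "bij_betw mu {L0..} {mu L0..}"
    unfolding bij_betw_def
  proof
    show "inj_on mu {L0..}"
    proof (rule inj_onI)
      fix x y assume x: "x \<in> {L0..}" and y: "y \<in> {L0..}" and e: "mu x = mu y"
      show "x = y"
      proof (rule ccontr)
        assume "x \<noteq> y"
        then consider "x < y" | "y < x" by linarith
        then show False
        proof cases
          case 1 then show False using mu_strict[of x y] x e by simp
        next
          case 2 then show False using mu_strict[of y x] y e by simp
        qed
      qed
    qed
    show "mu ` {L0..} = {mu L0..}"
    proof
      show "mu ` {L0..} \<subseteq> {mu L0..}" using mu_mono[of L0] by auto
      show "{mu L0..} \<subseteq> mu ` {L0..}"
      proof
        fix y assume "y \<in> {mu L0..}"
        then obtain l where "L0 \<le> l" "mu l = y" using surj by auto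
        then show "y \<in> mu ` {L0..}" by auto
      qed
    qed
  qed
qed

end

theorem lemma4p7:
  fixes g \<sigma> p0 p1 \<alpha> :: real and \<gamma>1 \<gamma>2 :: "real \<Rightarrow> real"
  assumes "g > 0" and "\<sigma> > 0" and "p0 < p1" and "p1 < 0"
    and "0 < \<alpha>" and "\<alpha> < 1"
    and "holder_on \<alpha> {p0..p1} \<gamma>1" and "holder_on \<alpha> {p1..0} \<gamma>2"
    and "\<forall>l \<ge> lam0 (gam p1 \<gamma>1 \<gamma>2) p0 g. \<exists>m \<ge> 0.
           Xi (gam p1 \<gamma>1 \<gamma>2) p0 g \<sigma> l m = 0 \<and>
           (\<forall>m'>m. Xi (gam p1 \<gamma>1 \<gamma>2) p0 g \<sigma> l m' < 0)"
  shows "filterlim (\<lambda>l. muf (gam p1 \<gamma>1 \<gamma>2) p0 g \<sigma> l / l) at_top at_top \<and>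
         bij_betw (muf (gam p1 \<gamma>1 \<gamma>2) p0 g \<sigma>)
           {lam0 (gam p1 \<gamma>1 \<gamma>2) p0 g..}
           {muf (gam p1 \<gamma>1 \<gamma>2) p0 g \<sigma> (lam0 (gam p1 \<gamma>1 \<gamma>2) p0 g)..}"
  proof -
  interpret setting_H g \<sigma> p0 p1 \<alpha> \<gamma>1 \<gamma>2
    by unfold_locales (use assms in auto)
  show ?thesis using main by simp
qed

end
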